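(* Assume $\mathbb{E}[W_0]<\infty$ and that $\mathbb{E}[W^2]$, $\mathbb{E}[(W\Delta')^2]$, $\mathbb{E}[W(\Delta')^2]$, $\mathbb{E}[(\Delta')^2]$ are finite. With $Y_{n,k}$ and $X_{n,k}$ as defined in the context, \[ \frac{\sum_{k=1}^{n-1}(Y_{n,k}-X_{n,k})}{\sqrt{\ln n}}\xrightarrow{p}0\quad\text{as } n\to\infty.\]
   Context: Blocks $\mathbf{B}_n=(B_n,D'_n,H'_n,P'_n,W_n)$: for $n\ge1$ i.i.d. hooked complete separable metric probability spaces $(B_n,D'_n,H'_n,P'_n)$ (hook $H'_n\in B_n$, $P'_n$ a Borel probability measure) with weights $W_n\ge0$, $\mathbb{E}[W_n]>0$; $\mathbf{B}_0$ independent of them, possibly differently distributed, with $W_0>0$. Let $S_k=\sum_{i=0}^kW_i$, so $\mathbb{E}[S_k]=k\mathbb{E}[W]+\mathbb{E}[W_0]$. $(W,\Delta')$ is a generic copy of $(W_n,\Delta'_n)$, $n\ge1$, where $\Delta'_n=D'_n(H'_n,U)$ with $U$ chosen in $B_n$ according to $P'_n$ given $\mathbf{B}_n$. Fix $n$. Conditionally on the blocks, let $J_{n,k}\sim\mathrm{Be}(W_k/S_k)$ and $\Delta'_{n,k}$ (distributed as $D'_k(H'_k,U_k)$, $U_k\sim P'_k$) be all independent, $0\le k\le n-1$, and $Y_{n,k}=J_{n,k}\Delta'_{n,k}$. For $1\le k\le n-1$ define $I_{n,k}$ as follows, using additional random variables $H_{n,k}$ that are, given the blocks, independent of each other and of all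 $J_{n,\cdot},\Delta'_{n,\cdot}$: if $W_k>\mathbb{E}[S_k]$, $I_{n,k}=0$; if $W_k\le\mathbb{E}[S_k]$ and $S_k\le\mathbb{E}[S_k]$, let $H_{n,k}\sim\mathrm{Be}(S_k/\mathbb{E}[S_k])$ and $I_{n,k}=H_{n,k}J_{n,k}$; if $W_k\le\mathbb{E}[S_k]<S_k$, let $H_{n,k}\sim\mathrm{Be}\big(\frac{W_k(S_k-\mathbb{E}[S_k])}{\mathbb{E}[S_k](S_k-W_k)}\big)$ and $I_{n,k}=\max(J_{n,k},H_{n,k})$. Set $X_{n,k}=I_{n,k}\Delta'_{n,k}$. *)

theory Defs
  imports "HOL-Probability.Probability"
begin

definition bern :: "real \<Rightarrow> real measure" where
  "bern p = distr (measure_pmf (bernoulli_pmf p)) borel (\<lambda>b. if b then 1 else 0)"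

text \<open>Success probability of the auxiliary variable H_{n,k}, given e = E[S_k], w = W_k, s = S_k.
  In the case w > e no H is needed; the value 0 is an unused dummy.\<close>
definition Hpar :: "real \<Rightarrow> real \<Rightarrow> real \<Rightarrow> real" where
  "Hpar e w s = (if w > e then 0 else if s \<le> e then s / e else (w * (s - e)) / (e * (s - w)))"

text \<open>The indicator I_{n,k} as a function of e = E[S_k], w = W_k, s = S_k, j = J_{n,k}, h = H_{n,k}.\<close>
definition Ifun :: "real \<Rightarrow> real \<Rightarrow> real \<Rightarrow> real \<Rightarrow> real \<Rightarrow> real" where
  "Ifun e w s j h = (if w > e then 0 else if s \<le> e then h * j else max j h)"

text \<open>Conditional law, given the block configuration b, of the triple (J_{n,k}, Delta'_{n,k}, H_{n,k}).
  w gives the weight of a block, kappa the law of D'(H',U) (U ~ P') given the block,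
  e = E[S_k].\<close>
definition triple_law :: "('b \<Rightarrow> real) \<Rightarrow> ('b \<Rightarrow> real measure) \<Rightarrow> real \<Rightarrow> (nat \<Rightarrow> 'b) \<Rightarrow> nat
    \<Rightarrow> (real \<times> real \<times> real) measure" where
  "triple_law w \<kappa> e b k =
     (let s = (\<Sum>i\<le>k. w (b i)) in
      bern (w (b k) / s) \<Otimes>\<^sub>M (\<kappa> (b k) \<Otimes>\<^sub>M bern (Hpar e (w (b k)) s)))"

end

theory Submission
  imports Defs
begin

lemma bern_sets[simp, measurable_cong]: "sets (bern p) = sets borel"
  by (simp add: bern_def)

lemma bern_space[simp]: "space (bern p) = UNIV"
  by (simp add: bern_def)

lemma prob_space_bern: "prob_space (bern p)"
  unfolding bern_def by (intro prob_space.prob_space_distr) (auto simp: prob_space_measure_pmf)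

lemma nn_integral_bern:
  assumes "0 \<le> p" "p \<le> 1" "f \<in> borel_measurable borel"
  shows "(\<integral>\<^sup>+x. f x \<partial>bern p) = f 1 * ennreal p + f 0 * ennreal (1 - p)"
  using assms unfolding bern_def
  by (subst nn_integral_distr) auto

lemma emeasure_bern:
  assumes "0 \<le> p" "p \<le> 1" "A \<in> sets borel"
  shows "emeasure (bern p) A = indicator A 1 * ennreal p + indicator A 0 * ennreal (1 - p)"
proof -
  have "emeasure (bern p) A = (\<integral>\<^sup>+x. indicator A x \<partial>bern p)"
    using assms by (simp add: nn_integral_indicator)
  also have "\<dots> = indicator A 1 * ennreal p + indicator A 0 * ennreal (1 - p)"
    using assms by (subst nn_integral_bern) auto
  finally show ?thesis .
qed

lemma measurable_bern:
  assumes [measurable]: "p \<in> borel_measurable A" and p01: "\<And>x. x \<in> space A \<Longrightarrow> 0 \<le> p x \<and> p x \<le> 1"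
  shows "(\<lambda>x. bern (p x)) \<in> measurable A (prob_algebra borel)"
proof (rule measurable_prob_algebraI)
  show "(\<lambda>x. bern (p x)) \<in> measurable A (subprob_algebra borel)"
  proof (rule measurable_subprob_algebra)
    fix a assume "a \<in> space A" show "subprob_space (bern (p a))"
      using prob_space_bern prob_space_imp_subprob_space by blast
  next
    fix a show "sets (bern (p a)) = sets borel" by simp
  next
    fix S :: "real set" assume S: "S \<in> sets borel"
    have "(\<lambda>x. indicator S 1 * ennreal (p x) + indicator S 0 * ennreal (1 - p x)) \<in> borel_measurable A"
      by measurable
    then show "(\<lambda>x. emeasure (bern (p x)) S) \<in> borel_measurable A"
      by (rule measurable_cong[THEN iffD1, rotated]) (use p01 S in \<open>simp add: emeasure_bern\<close>)
  qed
next
  fix x assume "x \<in> space A" show "prob_space (bern (p x))" by (rule prob_space_bern)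
qed

lemma measurable_PiM_kernel:
  fixes K :: "'x \<Rightarrow> 'i \<Rightarrow> 'c measure"
  assumes "finite I" and K: "\<And>i. i \<in> I \<Longrightarrow> (\<lambda>x. K x i) \<in> measurable A (prob_algebra X)"
  shows "(\<lambda>x. PiM I (K x)) \<in> measurable A (prob_algebra (PiM I (\<lambda>_. X)))"
  using assms
proof (induction I rule: finite_induct)
  case empty
  have "prob_space (PiM {} (\<lambda>_. X))" by (rule prob_space_PiM) auto
  then show ?case
    by (intro measurable_prob_algebraI measurable_const) (auto simp: PiM_empty space_subprob_algebra prob_space_imp_subprob_space)
next
  case (insert i I)
  have IH[measurable]: "(\<lambda>x. PiM I (K x)) \<in> measurable A (subprob_algebra (PiM I (\<lambda>_. X)))"
    using insert by (auto intro: measurable_prob_algebraD)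
  have Ki[measurable]: "(\<lambda>x. K x i) \<in> measurable A (subprob_algebra X)"
    using insert by (auto intro: measurable_prob_algebraD)
  have ps: "x \<in> space A \<Longrightarrow> j \<in> insert i I \<Longrightarrow> prob_space (K x j)" for x j
    using insert.prems[of j] by (auto dest!: measurable_space simp: space_prob_algebra)
  have ss: "x \<in> space A \<Longrightarrow> j \<in> insert i I \<Longrightarrow> sets (K x j) = sets X" for x j
    using insert.prems[of j] by (auto dest!: measurable_space simp: space_prob_algebra)
  have eq: "PiM (insert i I) (K x) = distr (K x i \<Otimes>\<^sub>M PiM I (K x)) (PiM (insert i I) (\<lambda>_. X)) (\<lambda>(y, Y). Y(i := y))"
    if x: "x \<in> space A" for x
  proof -
    have "PiM (insert i I) (K x) = distr (K x i \<Otimes>\<^sub>M PiM I (K x)) (PiM (insert i I) (K x)) (\<lambda>(y, Y). Y(i := y))"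
      by (rule distr_pair_PiM_eq_PiM[symmetric]) (use ps x in auto)
    also have "\<dots> = distr (K x i \<Otimes>\<^sub>M PiM I (K x)) (PiM (insert i I) (\<lambda>_. X)) (\<lambda>(y, Y). Y(i := y))"
      by (rule distr_cong) (auto intro!: sets_PiM_cong ss x)
    finally show ?thesis .
  qed
  have "(\<lambda>x. distr (K x i \<Otimes>\<^sub>M PiM I (K x)) (PiM (insert i I) (\<lambda>_. X)) (\<lambda>(y, Y). Y(i := y)))
      \<in> measurable A (subprob_algebra (PiM (insert i I) (\<lambda>_. X)))"
  proof (rule measurable_distr2[where M="X \<Otimes>\<^sub>M PiM I (\<lambda>_. X)"])
    show "(\<lambda>x. K x i \<Otimes>\<^sub>M PiM I (K x)) \<in> measurable A (subprob_algebra (X \<Otimes>\<^sub>M PiM I (\<lambda>_. X)))"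
      by (rule measurable_pair_measure) measurable
    show "(\<lambda>(x, yY). case yY of (y, Y) \<Rightarrow> Y(i := y)) \<in> measurable (A \<Otimes>\<^sub>M (X \<Otimes>\<^sub>M PiM I (\<lambda>_. X))) (PiM (insert i I) (\<lambda>_. X))"
    proof -
      have "(\<lambda>z. (snd (snd z)) (i := fst (snd z))) \<in> measurable (A \<Otimes>\<^sub>M (X \<Otimes>\<^sub>M PiM I (\<lambda>_. X))) (PiM (insert i I) (\<lambda>_. X))"
        by (rule measurable_fun_upd[where J=I]) auto
      then show ?thesis by (simp add: case_prod_beta')
    qed
  qed
  then have "(\<lambda>x. PiM (insert i I) (K x)) \<in> measurable A (subprob_algebra (PiM (insert i I) (\<lambda>_. X)))"
    by (rule measurable_cong[THEN iffD1, rotated]) (simp add: eq)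
  then show ?case
    by (rule measurable_prob_algebraI[rotated]) (auto intro!: prob_space_PiM ps)
qed

lemma measurable_Ifun[measurable]:
  assumes [measurable]: "e \<in> borel_measurable M" "w \<in> borel_measurable M" "s \<in> borel_measurable M"
    "j \<in> borel_measurable M" "h \<in> borel_measurable M"
  shows "(\<lambda>x. Ifun (e x) (w x) (s x) (j x) (h x)) \<in> borel_measurable M"
  unfolding Ifun_def by measurable

definition Qex :: "real \<Rightarrow> real \<Rightarrow> real \<Rightarrow> real \<Rightarrow> real \<Rightarrow> real" where
  "Qex e w s p q = p * (\<bar>1 - Ifun e w s 1 1\<bar> * q + \<bar>1 - Ifun e w s 1 0\<bar> * (1 - q))
     + (1 - p) * (\<bar>Ifun e w s 0 1\<bar> * q + \<bar>Ifun e w s 0 0\<bar> * (1 - q))"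

lemma triple_integral:
  assumes Km: "prob_space Km" "sets Km = sets borel"
    and p: "0 \<le> p" "p \<le> 1" and q: "0 \<le> q" "q \<le> 1"
  shows "(\<integral>\<^sup>+z. ennreal \<bar>fst z * fst (snd z) - Ifun e w s (fst z) (snd (snd z)) * fst (snd z)\<bar>
            \<partial>(bern p \<Otimes>\<^sub>M (Km \<Otimes>\<^sub>M bern q)))
         = ennreal (Qex e w s p q) * (\<integral>\<^sup>+d. ennreal \<bar>d\<bar> \<partial>Km)"
proof -
  interpret Km: prob_space Km by fact
  interpret Bp: prob_space "bern p" by (rule prob_space_bern)
  interpret Bq: prob_space "bern q" by (rule prob_space_bern)
  interpret P2: pair_prob_space Km "bern q" ..
  interpret P3: pair_prob_space "bern p" "Km \<Otimes>\<^sub>M bern q" ..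
  have Kmb[measurable_cong]: "sets Km = sets borel" by fact
  define c where "c j = \<bar>j - Ifun e w s j 1\<bar> * q + \<bar>j - Ifun e w s j 0\<bar> * (1 - q)" for j
  have c0: "c j \<ge> 0" for j using q by (simp add: c_def)
  have inner: "(\<integral>\<^sup>+hh. ennreal \<bar>j * d - Ifun e w s j hh * d\<bar> \<partial>bern q) = ennreal \<bar>d\<bar> * ennreal (c j)" for j d
  proof -
    have "(\<integral>\<^sup>+hh. ennreal \<bar>j * d - Ifun e w s j hh * d\<bar> \<partial>bern q)
       = ennreal \<bar>j * d - Ifun e w s j 1 * d\<bar> * ennreal q + ennreal \<bar>j * d - Ifun e w s j 0 * d\<bar> * ennreal (1 - q)"
      using q by (subst nn_integral_bern) auto
    also have "\<dots> = ennreal (\<bar>j * d - Ifun e w s j 1 * d\<bar> * q + \<bar>j * d - Ifun e w s j 0 * d\<bar> * (1 - q))"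
      using q by (simp add: ennreal_mult'' ennreal_plus)
    also have "\<bar>j * d - Ifun e w s j 1 * d\<bar> * q + \<bar>j * d - Ifun e w s j 0 * d\<bar> * (1 - q) = \<bar>d\<bar> * c j"
    proof -
      have "\<bar>j * d - Ifun e w s j hh * d\<bar> = \<bar>d\<bar> * \<bar>j - Ifun e w s j hh\<bar>" for hh
        by (simp add: left_diff_distrib[symmetric] abs_mult)
      then show ?thesis unfolding c_def by (simp add: algebra_simps)
    qed
    finally show ?thesis by (simp add: ennreal_mult')
  qed
  have mid: "(\<integral>\<^sup>+d. \<integral>\<^sup>+hh. ennreal \<bar>j * d - Ifun e w s j hh * d\<bar> \<partial>bern q \<partial>Km) = (\<integral>\<^sup>+d. ennreal \<bar>d\<bar> \<partial>Km) * ennreal (c j)" for j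
    by (simp add: inner nn_integral_multc)
  have "(\<integral>\<^sup>+z. ennreal \<bar>fst z * fst (snd z) - Ifun e w s (fst z) (snd (snd z)) * fst (snd z)\<bar>
            \<partial>(bern p \<Otimes>\<^sub>M (Km \<Otimes>\<^sub>M bern q)))
      = (\<integral>\<^sup>+j. \<integral>\<^sup>+y. ennreal \<bar>j * fst y - Ifun e w s j (snd y) * fst y\<bar> \<partial>(Km \<Otimes>\<^sub>M bern q) \<partial>bern p)"
  proof -
    have "(\<lambda>z. ennreal \<bar>fst z * fst (snd z) - Ifun e w s (fst z) (snd (snd z)) * fst (snd z)\<bar>)
        \<in> borel_measurable (bern p \<Otimes>\<^sub>M (Km \<Otimes>\<^sub>M bern q))" by measurable
    from sigma_finite_measure.nn_integral_fst[OF prob_space_imp_sigma_finite[OF prob_space_pair[OF Km(1) prob_space_bern]] this] show ?thesis by (simp add: case_prod_beta)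
  qed
  also have "\<dots> = (\<integral>\<^sup>+j. \<integral>\<^sup>+d. \<integral>\<^sup>+hh. ennreal \<bar>j * d - Ifun e w s j hh * d\<bar> \<partial>bern q \<partial>Km \<partial>bern p)"
  proof (intro nn_integral_cong)
    fix j
    have "(\<lambda>y. ennreal \<bar>j * fst y - Ifun e w s j (snd y) * fst y\<bar>) \<in> borel_measurable (Km \<Otimes>\<^sub>M bern q)" by measurable
    from sigma_finite_measure.nn_integral_fst[OF prob_space_imp_sigma_finite[OF prob_space_bern] this] show "(\<integral>\<^sup>+y. ennreal \<bar>j * fst y - Ifun e w s j (snd y) * fst y\<bar> \<partial>(Km \<Otimes>\<^sub>M bern q))
       = (\<integral>\<^sup>+d. \<integral>\<^sup>+hh. ennreal \<bar>j * d - Ifun e w s j hh * d\<bar> \<partial>bern q \<partial>Km)" by simp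
  qed
  also have "\<dots> = (\<integral>\<^sup>+j. (\<integral>\<^sup>+d. ennreal \<bar>d\<bar> \<partial>Km) * ennreal (c j) \<partial>bern p)"
    by (simp add: mid)
  also have "\<dots> = (\<integral>\<^sup>+d. ennreal \<bar>d\<bar> \<partial>Km) * ennreal (c 1) * ennreal p + (\<integral>\<^sup>+d. ennreal \<bar>d\<bar> \<partial>Km) * ennreal (c 0) * ennreal (1 - p)"
  proof -
    have "(\<lambda>j. (\<integral>\<^sup>+d. ennreal \<bar>d\<bar> \<partial>Km) * ennreal (c j)) \<in> borel_measurable borel"
      unfolding c_def by measurable
    then show ?thesis using p by (subst nn_integral_bern) auto
  qed
  also have "\<dots> = ennreal (c 1 * p + c 0 * (1 - p)) * (\<integral>\<^sup>+d. ennreal \<bar>d\<bar> \<partial>Km)"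
  proof -
    have "ennreal (c 1 * p + c 0 * (1 - p)) = ennreal (c 1) * ennreal p + ennreal (c 0) * ennreal (1 - p)"
      using p c0 by (simp add: ennreal_mult'' ennreal_plus)
    then show ?thesis by (simp add: algebra_simps)
  qed
  also have "c 1 * p + c 0 * (1 - p) = Qex e w s p q"
    by (simp add: c_def Qex_def algebra_simps)
  finally show ?thesis .
qed

lemma Qex_cases:
  assumes e: "e > 0" and w: "0 \<le> w" "w \<le> s" and s: "s > 0"
  shows "Qex e w s (w / s) (Hpar e w s) = (if w > e then w / s else w * \<bar>s - e\<bar> / (s * e))"
proof (cases "w > e")
  case True then show ?thesis by (simp add: Qex_def Ifun_def Hpar_def)
next
  case False
  note F = this
  show ?thesis
  proof (cases "s \<le> e")
    case True
    then have "Qex e w s (w / s) (Hpar e w s) = w / s * (1 - s / e)"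
      using F by (simp add: Qex_def Ifun_def Hpar_def)
    also have "\<dots> = w * \<bar>s - e\<bar> / (s * e)" using True e s by (simp add: field_simps)
    finally show ?thesis using F by simp
  next
    case False
    then have "Qex e w s (w / s) (Hpar e w s) = (1 - w / s) * (w * (s - e) / (e * (s - w)))"
      using F by (simp add: Qex_def Ifun_def Hpar_def)
    also have "\<dots> = w * \<bar>s - e\<bar> / (s * e)" using False F e s by (simp add: field_simps)
    finally show ?thesis using F by simp
  qed
qed

lemma abs_le_sq: fixes x c :: real assumes "c > 0" shows "2 * \<bar>x\<bar> \<le> x\<^sup>2 / c + c"
proof -
  have "0 \<le> (\<bar>x\<bar> - c)\<^sup>2" by simp
  then have "2 * c * \<bar>x\<bar> \<le> x\<^sup>2 + c\<^sup>2" by (simp add: power2_eq_square algebra_simps)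
  then show ?thesis using assms by (simp add: field_simps power2_eq_square)
qed

lemma Qex_bound:
  fixes e w W0 T a mu mu0 :: real
  assumes e: "e = a + mu + mu0" "e > 0" and nn: "0 \<le> w" "0 < W0" "0 \<le> T" "0 \<le> mu" "0 \<le> mu0" "0 \<le> a"
  defines "s \<equiv> w + W0 + T"
  shows "Qex e w s (w / s) (Hpar e w s) \<le>
     (3 * w\<^sup>2 + 2 * mu * w + 2 * w * (W0 + mu0) + w * ((T - a)\<^sup>2 / sqrt e + sqrt e)) / e\<^sup>2
     + (if T < e / 2 then 1 else 0)"
proof -
  have s: "s > 0" "w \<le> s" using nn by (auto simp: s_def)
  have R0: "0 \<le> (3 * w\<^sup>2 + 2 * mu * w + 2 * w * (W0 + mu0) + w * ((T - a)\<^sup>2 / sqrt e + sqrt e)) / e\<^sup>2"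
    using nn e by (intro divide_nonneg_pos add_nonneg_nonneg mult_nonneg_nonneg) auto
  have I0: "0 \<le> (if T < e / 2 then 1 else 0::real)" by simp
  show ?thesis
  proof (cases "w > e")
    case True
    have "w / s \<le> 1" using s by simp
    also have "1 \<le> w\<^sup>2 / e\<^sup>2" using True e by (simp add: power_mono)
    also have "\<dots> \<le> 3 * w\<^sup>2 / e\<^sup>2" by (simp add: divide_right_mono)
    also have "\<dots> \<le> (3 * w\<^sup>2 + 2 * mu * w + 2 * w * (W0 + mu0) + w * ((T - a)\<^sup>2 / sqrt e + sqrt e)) / e\<^sup>2"
      using nn e by (intro divide_right_mono) (auto intro!: add_nonneg_nonneg mult_nonneg_nonneg)
    finally show ?thesis using True Qex_cases[OF e(2) nn(1) s(2) s(1)] I0 by simp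
  next
    case False
    then have Q: "Qex e w s (w / s) (Hpar e w s) = w * \<bar>s - e\<bar> / (s * e)"
      using Qex_cases[OF e(2) nn(1) s(2) s(1)] by simp
    show ?thesis
    proof (cases "s < e / 2")
      case True
      then have T: "T < e / 2" using nn by (simp add: s_def)
      have "w * \<bar>s - e\<bar> / (s * e) = (w / s) * (\<bar>s - e\<bar> / e)" by simp
      also have "\<dots> \<le> 1 * 1"
        using s True e nn by (intro mult_mono) auto
      finally show ?thesis using Q T R0 by simp
    next
      case False
      have "w * \<bar>s - e\<bar> / (s * e) \<le> w * \<bar>s - e\<bar> / (e / 2 * e)"
        using False e nn by (intro divide_left_mono mult_right_mono mult_nonneg_nonneg) auto
      also have "\<dots> = 2 * w * \<bar>s - e\<bar> / e\<^sup>2" by (simp add: power2_eq_square)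
      also have "\<dots> \<le> (3 * w\<^sup>2 + 2 * mu * w + 2 * w * (W0 + mu0) + w * ((T - a)\<^sup>2 / sqrt e + sqrt e)) / e\<^sup>2"
      proof (intro divide_right_mono)
        have "\<bar>s - e\<bar> \<le> \<bar>T - a\<bar> + W0 + mu0 + w + mu"
          using nn unfolding s_def e(1) by linarith
        then have "2 * w * \<bar>s - e\<bar> \<le> w * (2 * \<bar>T - a\<bar>) + 2 * w * (W0 + mu0) + 2 * w\<^sup>2 + 2 * mu * w"
        proof -
          have "2 * w * \<bar>s - e\<bar> \<le> 2 * w * (\<bar>T - a\<bar> + W0 + mu0 + w + mu)"
            using nn \<open>\<bar>s - e\<bar> \<le> _\<close> by (intro mult_left_mono) auto
          then show ?thesis by (simp add: power2_eq_square algebra_simps)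
        qed
        also have "\<dots> \<le> w * ((T - a)\<^sup>2 / sqrt e + sqrt e) + 2 * w * (W0 + mu0) + 2 * w\<^sup>2 + 2 * mu * w"
          using abs_le_sq[of "sqrt e" "T - a"] e nn by (simp add: mult_left_mono)
        also have "\<dots> \<le> 3 * w\<^sup>2 + 2 * mu * w + 2 * w * (W0 + mu0) + w * ((T - a)\<^sup>2 / sqrt e + sqrt e)"
          by simp
        finally show "2 * w * \<bar>s - e\<bar> \<le> 3 * w\<^sup>2 + 2 * mu * w + 2 * w * (W0 + mu0) + w * ((T - a)\<^sup>2 / sqrt e + sqrt e)" .
      qed simp
      finally show ?thesis using Q I0 by simp
    qed
  qed
qed

locale setting = prob_space M for M :: "'a measure" +
  fixes N :: "'b measure"
    and B :: "nat \<Rightarrow> 'a \<Rightarrow> 'b"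
    and w :: "'b \<Rightarrow> real"
    and \<kappa> :: "'b \<Rightarrow> real measure"
    and J D H :: "nat \<Rightarrow> nat \<Rightarrow> 'a \<Rightarrow> real"
  assumes B_meas[measurable]: "\<And>k. B k \<in> measurable M N"
    and B_indep: "indep_vars (\<lambda>_. N) B UNIV"
    and B_ident: "\<And>k. k \<ge> 1 \<Longrightarrow> distr M N (B k) = distr M N (B 1)"
    and w_meas[measurable]: "w \<in> borel_measurable N"
    and w_nonneg: "\<And>b. b \<in> space N \<Longrightarrow> w b \<ge> 0"
    and W0_pos: "\<And>x. x \<in> space M \<Longrightarrow> w (B 0 x) > 0"
    and kappa_meas[measurable]: "\<kappa> \<in> measurable N (prob_algebra borel)"
    and kappa_nonneg: "\<And>b. b \<in> space N \<Longrightarrow> AE d in \<kappa> b. d \<ge> 0"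
    and EW_pos: "expectation (\<lambda>x. w (B 1 x)) > 0"
    and EW0_fin: "integrable M (\<lambda>x. w (B 0 x))"
    and mom1: "integrable (bind (distr M N (B 1)) (\<lambda>b. distr (\<kappa> b) (borel \<Otimes>\<^sub>M borel) (\<lambda>d. (w b, d))))
                  (\<lambda>(a, d). a\<^sup>2)"
    and mom2: "integrable (bind (distr M N (B 1)) (\<lambda>b. distr (\<kappa> b) (borel \<Otimes>\<^sub>M borel) (\<lambda>d. (w b, d))))
                  (\<lambda>(a, d). (a * d)\<^sup>2)"
    and mom3: "integrable (bind (distr M N (B 1)) (\<lambda>b. distr (\<kappa> b) (borel \<Otimes>\<^sub>M borel) (\<lambda>d. (w b, d))))
                  (\<lambda>(a, d). a * d\<^sup>2)"
    and mom4: "integrable (bind (distr M N (B 1)) (\<lambda>b. distr (\<kappa> b) (borel \<Otimes>\<^sub>M borel) (\<lambda>d. (w b, d))))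
                  (\<lambda>(a, d). d\<^sup>2)"
    and J_meas[measurable]: "\<And>n k. J n k \<in> borel_measurable M"
    and D_meas[measurable]: "\<And>n k. D n k \<in> borel_measurable M"
    and H_meas[measurable]: "\<And>n k. H n k \<in> borel_measurable M"
    and joint: "\<And>n. distr M
        ((\<Pi>\<^sub>M i\<in>UNIV. N) \<Otimes>\<^sub>M (\<Pi>\<^sub>M k\<in>{0..<n}. borel \<Otimes>\<^sub>M (borel \<Otimes>\<^sub>M borel)))
        (\<lambda>x. ((\<lambda>i. B i x), (\<lambda>k\<in>{0..<n}. (J n k x, D n k x, H n k x))))
      = bind (distr M (\<Pi>\<^sub>M i\<in>UNIV. N) (\<lambda>x i. B i x))
          (\<lambda>b. distr (\<Pi>\<^sub>M k\<in>{0..<n}. triple_law w \<kappa>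
                         (real k * expectation (\<lambda>x. w (B 1 x))
                            + expectation (\<lambda>x. w (B 0 x))) b k)
                  ((\<Pi>\<^sub>M i\<in>UNIV. N) \<Otimes>\<^sub>M (\<Pi>\<^sub>M k\<in>{0..<n}. borel \<Otimes>\<^sub>M (borel \<Otimes>\<^sub>M borel)))
                  (\<lambda>t. (b, t)))"
begin

definition "mu = expectation (\<lambda>x. w (B 1 x))"
definition "mu0 = expectation (\<lambda>x. w (B 0 x))"
definition "ee k = real k * mu + mu0"
definition "mm b = (\<integral>\<^sup>+d. ennreal \<bar>d\<bar> \<partial>\<kappa> b)"

lemma mu_pos: "mu > 0" using EW_pos by (simp add: mu_def)

lemma mu0_pos: "mu0 > 0"
proof -
  have "0 \<le> mu0" unfolding mu0_def using W0_pos by (intro integral_nonneg_AE) (auto intro: less_imp_le)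
  moreover have "mu0 \<noteq> 0"
  proof
    assume "mu0 = 0"
    then have "AE x in M. w (B 0 x) = 0"
      unfolding mu0_def using W0_pos EW0_fin
      by (subst integral_nonneg_eq_0_iff_AE[symmetric]) (auto intro: less_imp_le)
    moreover have "AE x in M. w (B 0 x) \<noteq> 0" using W0_pos by (intro AE_I2) (metis less_irrefl)
    ultimately show False by (rule AE_contr)
  qed
  ultimately show ?thesis by simp
qed

lemma ee_pos: "ee k > 0" using mu_pos mu0_pos by (simp add: ee_def add_nonneg_pos)

lemma kappa_prob: "b \<in> space N \<Longrightarrow> prob_space (\<kappa> b)"
  using measurable_space[OF kappa_meas] by (auto simp: space_prob_algebra)

lemma kappa_sets: "b \<in> space N \<Longrightarrow> sets (\<kappa> b) = sets borel"
  using measurable_space[OF kappa_meas] by (auto simp: space_prob_algebra)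

lemma mm_meas[measurable]: "mm \<in> borel_measurable N"
proof -
  have "(\<lambda>K. integral\<^sup>N K (\<lambda>d. ennreal \<bar>d\<bar>)) \<in> borel_measurable (subprob_algebra borel)"
    by (rule nn_integral_measurable_subprob_algebra) measurable
  from measurable_comp[OF measurable_prob_algebraD[OF kappa_meas] this]
  show ?thesis unfolding mm_def by (simp add: comp_def)
qed

end

context setting begin

abbreviation "Tri \<equiv> (borel \<Otimes>\<^sub>M (borel \<Otimes>\<^sub>M borel) :: (real \<times> real \<times> real) measure)"
abbreviation "Om \<equiv> (PiM UNIV (\<lambda>_::nat. N))"

definition "pp k b = w (b k) / (\<Sum>i\<le>k. w (b i))"
definition "qq k b = Hpar (ee k) (w (b k)) (\<Sum>i\<le>k. w (b i))"

lemma pp_meas[measurable]: "pp k \<in> borel_measurable Om"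
  unfolding pp_def by measurable

lemma qq_meas[measurable]: "qq k \<in> borel_measurable Om"
  unfolding qq_def Hpar_def by measurable

lemma Om_space: "b \<in> space Om \<Longrightarrow> b i \<in> space N"
  by (auto simp: space_PiM PiE_iff)

lemma wsum_nonneg: "b \<in> space Om \<Longrightarrow> 0 \<le> (\<Sum>i\<le>k. w (b i))"
  by (intro sum_nonneg w_nonneg Om_space)

lemma w_le_sum: "b \<in> space Om \<Longrightarrow> w (b k) \<le> (\<Sum>i\<le>k. w (b i))"
  by (rule member_le_sum) (auto intro: w_nonneg Om_space)

lemma pp01: "b \<in> space Om \<Longrightarrow> 0 \<le> pp k b \<and> pp k b \<le> 1"
  unfolding pp_def using w_le_sum[of b k] wsum_nonneg[of b k] w_nonneg[OF Om_space, of b k]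
  by (auto simp: divide_le_eq_1)

lemma qq01: "b \<in> space Om \<Longrightarrow> 0 \<le> qq k b \<and> qq k b \<le> 1"
proof -
  assume b: "b \<in> space Om"
  define s where "s = (\<Sum>i\<le>k. w (b i))"
  have s0: "0 \<le> s" using wsum_nonneg[OF b] by (simp add: s_def)
  have w0: "0 \<le> w (b k)" using b w_nonneg Om_space by auto
  have e: "ee k > 0" by (rule ee_pos)
  show ?thesis
    unfolding qq_def Hpar_def s_def[symmetric]
  proof (cases "w (b k) > ee k")
    case False
    show "0 \<le> (if ee k < w (b k) then 0 else if s \<le> ee k then s / ee k else w (b k) * (s - ee k) / (ee k * (s - w (b k))))
      \<and> (if ee k < w (b k) then 0 else if s \<le> ee k then s / ee k else w (b k) * (s - ee k) / (ee k * (s - w (b k)))) \<le> 1"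
    proof (cases "s \<le> ee k")
      case True then show ?thesis using False s0 e by (auto simp: divide_le_eq_1)
    next
      case F2: False
      have "w (b k) * (s - ee k) \<le> ee k * (s - w (b k))"
        using False F2 e w0 by (simp add: algebra_simps mult_right_mono)
      then show ?thesis using False F2 e w0 by (auto simp: divide_le_eq_1 intro!: divide_nonneg_pos mult_nonneg_nonneg)
    qed
  qed simp
qed

lemma triple_law_eq: "triple_law w \<kappa> (ee k) b k = bern (pp k b) \<Otimes>\<^sub>M (\<kappa> (b k) \<Otimes>\<^sub>M bern (qq k b))"
  by (simp add: triple_law_def pp_def qq_def Let_def)

lemma tl_meas: "(\<lambda>b. triple_law w \<kappa> (ee k) b k) \<in> measurable Om (prob_algebra Tri)"
proof -
  have kk: "(\<lambda>b. \<kappa> (b k)) \<in> measurable Om (prob_algebra borel)"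
    by measurable
  have 1: "(\<lambda>b. bern (pp k b)) \<in> measurable Om (prob_algebra borel)"
    by (rule measurable_bern) (auto simp: pp01)
  have 2: "(\<lambda>b. bern (qq k b)) \<in> measurable Om (prob_algebra borel)"
    by (rule measurable_bern) (auto simp: qq01)
  have "(\<lambda>b. bern (pp k b) \<Otimes>\<^sub>M (\<kappa> (b k) \<Otimes>\<^sub>M bern (qq k b))) \<in> measurable Om (subprob_algebra Tri)"
    by (intro measurable_pair_measure measurable_prob_algebraD 1 2 kk)
  moreover have "b \<in> space Om \<Longrightarrow> prob_space (bern (pp k b) \<Otimes>\<^sub>M (\<kappa> (b k) \<Otimes>\<^sub>M bern (qq k b)))" for b
    by (intro prob_space_pair prob_space_bern kappa_prob Om_space)
  ultimately show ?thesis unfolding triple_law_eq by (intro measurable_prob_algebraI)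
qed

lemma tl_prob: "b \<in> space Om \<Longrightarrow> prob_space (triple_law w \<kappa> (ee k) b k)"
  using measurable_space[OF tl_meas] by (auto simp: space_prob_algebra)

end

context setting begin

lemma Bvec_meas[measurable]: "(\<lambda>x i. B i x) \<in> measurable M Om"
  by (rule measurable_PiM_single') (auto intro: measurable_space)

lemma joint': "distr M (Om \<Otimes>\<^sub>M PiM {0..<n} (\<lambda>_. Tri))
        (\<lambda>x. ((\<lambda>i. B i x), (\<lambda>k\<in>{0..<n}. (J n k x, D n k x, H n k x))))
      = bind (distr M Om (\<lambda>x i. B i x))
          (\<lambda>b. distr (PiM {0..<n} (\<lambda>k. triple_law w \<kappa> (ee k) b k)) (Om \<Otimes>\<^sub>M PiM {0..<n} (\<lambda>_. Tri)) (\<lambda>t. (b, t)))"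
  using joint[of n] by (simp add: ee_def mu_def mu0_def)

definition "gk k b y = ennreal \<bar>fst y * fst (snd y) - Ifun (ee k) (w (b k)) (\<Sum>i\<le>k. w (b i)) (fst y) (snd (snd y)) * fst (snd y)\<bar>"

lemma per_k:
  assumes kn: "k < n"
  shows "(\<integral>\<^sup>+x. ennreal \<bar>J n k x * D n k x - Ifun (ee k) (w (B k x)) (\<Sum>i\<le>k. w (B i x)) (J n k x) (H n k x) * D n k x\<bar> \<partial>M)
   = (\<integral>\<^sup>+x. ennreal (Qex (ee k) (w (B k x)) (\<Sum>i\<le>k. w (B i x)) (pp k (\<lambda>i. B i x)) (qq k (\<lambda>i. B i x))) * mm (B k x) \<partial>M)"
proof -
  let ?P = "PiM {0..<n} (\<lambda>_::nat. Tri)"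
  let ?X = "Om \<Otimes>\<^sub>M ?P"
  let ?T = "\<lambda>b. PiM {0..<n} (\<lambda>k. triple_law w \<kappa> (ee k) b k)"
  define K where "K b = distr (?T b) ?X (\<lambda>t. (b, t))" for b
  define G where "G z = gk k (fst z) (snd z k)" for z :: "(nat \<Rightarrow> 'b) \<times> (nat \<Rightarrow> real \<times> real \<times> real)"
  define F where "F x = ((\<lambda>i. B i x), (\<lambda>k\<in>{0..<n}. (J n k x, D n k x, H n k x)))" for x
  have kI: "k \<in> {0..<n}" using kn by simp
  have F_meas: "F \<in> measurable M ?X" unfolding F_def by measurable
  have snd_k: "(\<lambda>z. snd z k) \<in> measurable ?X Tri"
    using measurable_component_singleton[OF kI, of "\<lambda>_. Tri"] by measurable
  have G_meas: "G \<in> borel_measurable ?X"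
    unfolding G_def gk_def using snd_k by measurable
  have T_meas: "?T \<in> measurable Om (prob_algebra ?P)"
    by (rule measurable_PiM_kernel) (auto intro: tl_meas)
  have K_meas: "K \<in> measurable Om (subprob_algebra ?X)"
    unfolding K_def
  proof (rule measurable_distr2[where M="?P"])
    show "?T \<in> measurable Om (subprob_algebra ?P)" using T_meas by (rule measurable_prob_algebraD)
    show "(\<lambda>(b, t). (b, t)) \<in> measurable (Om \<Otimes>\<^sub>M ?P) ?X" by simp
  qed
  have "(\<integral>\<^sup>+x. ennreal \<bar>J n k x * D n k x - Ifun (ee k) (w (B k x)) (\<Sum>i\<le>k. w (B i x)) (J n k x) (H n k x) * D n k x\<bar> \<partial>M)
      = (\<integral>\<^sup>+x. G (F x) \<partial>M)"
    using kI by (intro nn_integral_cong) (simp add: G_def F_def gk_def)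
  also have "\<dots> = (\<integral>\<^sup>+z. G z \<partial>distr M ?X F)"
    using F_meas G_meas by (simp add: nn_integral_distr)
  also have "distr M ?X F = bind (distr M Om (\<lambda>x i. B i x)) K"
    unfolding F_def K_def by (rule joint')
  also have "(\<integral>\<^sup>+z. G z \<partial>bind (distr M Om (\<lambda>x i. B i x)) K) = (\<integral>\<^sup>+b. \<integral>\<^sup>+z. G z \<partial>K b \<partial>distr M Om (\<lambda>x i. B i x))"
    by (rule nn_integral_bind[OF G_meas]) (simp add: K_meas)
  also have "\<dots> = (\<integral>\<^sup>+b. ennreal (Qex (ee k) (w (b k)) (\<Sum>i\<le>k. w (b i)) (pp k b) (qq k b)) * mm (b k) \<partial>distr M Om (\<lambda>x i. B i x))"
  proof (intro nn_integral_cong)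
    fix b assume b: "b \<in> space (distr M Om (\<lambda>x i. B i x))"
    then have b: "b \<in> space Om" by simp
    have psT: "\<And>j. j \<in> {0..<n} \<Longrightarrow> prob_space (triple_law w \<kappa> (ee j) b j)" using b by (rule tl_prob)
    have setsT: "sets (?T b) = sets ?P"
      using measurable_space[OF T_meas b] by (simp add: space_prob_algebra)
    have "(\<integral>\<^sup>+z. G z \<partial>K b) = (\<integral>\<^sup>+t. G (b, t) \<partial>?T b)"
      unfolding K_def
    proof (rule nn_integral_distr)
      show "(\<lambda>t. (b, t)) \<in> measurable (?T b) ?X"
      proof -
        have "Pair b \<in> measurable ?P ?X" by (rule measurable_Pair1'[OF b])
        then show ?thesis by (subst measurable_cong_sets[OF setsT refl])
      qed
    next
      show "G \<in> borel_measurable (distr (?T b) ?X (\<lambda>t. (b, t)))"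
        by (subst measurable_cong_sets[OF sets_distr refl]) (rule G_meas)
    qed
    also have "\<dots> = (\<integral>\<^sup>+t. gk k b (t k) \<partial>?T b)" by (simp add: G_def)
    also have "\<dots> = (\<integral>\<^sup>+y. gk k b y \<partial>distr (?T b) (triple_law w \<kappa> (ee k) b k) (\<lambda>t. t k))"
    proof (rule nn_integral_distr[symmetric])
      show "(\<lambda>t. t k) \<in> measurable (?T b) (triple_law w \<kappa> (ee k) b k)"
        by (rule measurable_component_singleton[OF kI])
      have sT: "sets (triple_law w \<kappa> (ee k) b k) = sets Tri"
        using measurable_space[OF tl_meas b] by (simp add: space_prob_algebra)
      have "gk k b \<in> borel_measurable (triple_law w \<kappa> (ee k) b k)"
        unfolding gk_def by (subst measurable_cong_sets[OF sT refl]) measurable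
      then show "gk k b \<in> borel_measurable (distr (?T b) (triple_law w \<kappa> (ee k) b k) (\<lambda>t. t k))"
        by (subst measurable_cong_sets[OF sets_distr refl])
    qed
    also have "distr (?T b) (triple_law w \<kappa> (ee k) b k) (\<lambda>t. t k) = triple_law w \<kappa> (ee k) b k"
      by (rule distr_PiM_component[OF psT kI])
    also have "(\<integral>\<^sup>+y. gk k b y \<partial>triple_law w \<kappa> (ee k) b k)
        = ennreal (Qex (ee k) (w (b k)) (\<Sum>i\<le>k. w (b i)) (pp k b) (qq k b)) * mm (b k)"
      unfolding triple_law_eq gk_def mm_def
      using pp01[OF b, of k] qq01[OF b, of k]
      by (intro triple_integral kappa_prob kappa_sets Om_space b) auto
    finally show "(\<integral>\<^sup>+z. G z \<partial>K b) = ennreal (Qex (ee k) (w (b k)) (\<Sum>i\<le>k. w (b i)) (pp k b) (qq k b)) * mm (b k)" .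
  qed
  also have "\<dots> = (\<integral>\<^sup>+x. ennreal (Qex (ee k) (w (B k x)) (\<Sum>i\<le>k. w (B i x)) (pp k (\<lambda>i. B i x)) (qq k (\<lambda>i. B i x))) * mm (B k x) \<partial>M)"
    by (subst nn_integral_distr) (auto simp: Qex_def intro!: Bvec_meas)
  finally show ?thesis .
qed

end

lemma (in prob_space) indep_var_nn_integral_mult:
  assumes ind: "indep_var S X T Y" and f: "f \<in> borel_measurable S" and g: "g \<in> borel_measurable T"
  shows "(\<integral>\<^sup>+x. f (X x) * g (Y x) \<partial>M) = (\<integral>\<^sup>+x. f (X x) \<partial>M) * (\<integral>\<^sup>+x. g (Y x) \<partial>M)"
proof -
  have X: "X \<in> measurable M S" and Y: "Y \<in> measurable M T"
    using indep_var_rv1[OF ind] indep_var_rv2[OF ind] by auto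
  have eq: "distr M S X \<Otimes>\<^sub>M distr M T Y = distr M (S \<Otimes>\<^sub>M T) (\<lambda>x. (X x, Y x))"
    using ind by (simp add: indep_var_distribution_eq)
  interpret SX: prob_space "distr M S X" by (rule prob_space_distr[OF X])
  interpret TY: prob_space "distr M T Y" by (rule prob_space_distr[OF Y])
  interpret P: pair_prob_space "distr M S X" "distr M T Y" ..
  have gd: "g \<in> borel_measurable (distr M T Y)" by (subst measurable_cong_sets[OF sets_distr refl]) (rule g)
  have fd: "f \<in> borel_measurable (distr M S X)" by (subst measurable_cong_sets[OF sets_distr refl]) (rule f)
  have fg: "(\<lambda>z. f (fst z) * g (snd z)) \<in> borel_measurable (S \<Otimes>\<^sub>M T)" using f g by measurable
  have "(\<integral>\<^sup>+x. f (X x) * g (Y x) \<partial>M) = (\<integral>\<^sup>+z. f (fst z) * g (snd z) \<partial>distr M (S \<Otimes>\<^sub>M T) (\<lambda>x. (X x, Y x)))"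
    using X Y fg by (subst nn_integral_distr) auto
  also have "\<dots> = (\<integral>\<^sup>+z. f (fst z) * g (snd z) \<partial>(distr M S X \<Otimes>\<^sub>M distr M T Y))" by (simp add: eq)
  also have "\<dots> = (\<integral>\<^sup>+a. \<integral>\<^sup>+b. f a * g b \<partial>distr M T Y \<partial>distr M S X)"
  proof -
    have "(\<lambda>z. f (fst z) * g (snd z)) \<in> borel_measurable (distr M S X \<Otimes>\<^sub>M distr M T Y)"
      using fg by (simp add: measurable_cong_sets[OF sets_pair_measure_cong[OF sets_distr sets_distr] refl])
    from TY.nn_integral_fst[OF this] show ?thesis by simp
  qed
  also have "\<dots> = (\<integral>\<^sup>+a. f a * (\<integral>\<^sup>+b. g b \<partial>distr M T Y) \<partial>distr M S X)"
    by (intro nn_integral_cong nn_integral_cmult gd)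
  also have "\<dots> = (\<integral>\<^sup>+a. f a \<partial>distr M S X) * (\<integral>\<^sup>+b. g b \<partial>distr M T Y)"
    by (rule nn_integral_multc[OF fd])
  also have "\<dots> = (\<integral>\<^sup>+x. f (X x) \<partial>M) * (\<integral>\<^sup>+x. g (Y x) \<partial>M)"
    using X Y f g by (simp add: nn_integral_distr)
  finally show ?thesis .
qed

context setting begin

lemma indep_factor:
  assumes F: "F \<in> borel_measurable N" and G: "G \<in> borel_measurable (PiM {..<k} (\<lambda>_. N))"
  shows "(\<integral>\<^sup>+x. F (B k x) * G (\<lambda>i\<in>{..<k}. B i x) \<partial>M)
       = (\<integral>\<^sup>+x. F (B k x) \<partial>M) * (\<integral>\<^sup>+x. G (\<lambda>i\<in>{..<k}. B i x) \<partial>M)"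
proof -
  have ind: "indep_var (PiM {k} (\<lambda>_. N)) (\<lambda>x. \<lambda>i\<in>{k}. B i x) (PiM {..<k} (\<lambda>_. N)) (\<lambda>x. \<lambda>i\<in>{..<k}. B i x)"
    by (rule indep_var_restrict[OF B_indep]) auto
  have F': "(\<lambda>r. F (r k)) \<in> borel_measurable (PiM {k} (\<lambda>_. N))" using F by measurable
  from indep_var_nn_integral_mult[OF ind F' G] show ?thesis by simp
qed

lemma same_law:
  assumes "k \<ge> 1" and F: "F \<in> borel_measurable N"
  shows "(\<integral>\<^sup>+x. F (B k x) \<partial>M) = (\<integral>\<^sup>+x. F (B 1 x) \<partial>M)"
proof -
  have "(\<integral>\<^sup>+x. F (B k x) \<partial>M) = (\<integral>\<^sup>+y. F y \<partial>distr M N (B k))" using F by (simp add: nn_integral_distr)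
  also have "\<dots> = (\<integral>\<^sup>+y. F y \<partial>distr M N (B 1))" using B_ident[OF assms(1)] by simp
  also have "\<dots> = (\<integral>\<^sup>+x. F (B 1 x) \<partial>M)" using F by (simp add: nn_integral_distr)
  finally show ?thesis .
qed

lemma same_law_integral:
  fixes F :: "'b \<Rightarrow> real"
  assumes "k \<ge> 1" and F: "F \<in> borel_measurable N"
  shows "(\<integral>x. F (B k x) \<partial>M) = (\<integral>x. F (B 1 x) \<partial>M)"
    and "integrable M (\<lambda>x. F (B k x)) \<longleftrightarrow> integrable M (\<lambda>x. F (B 1 x))"
proof -
  have "(\<integral>x. F (B k x) \<partial>M) = (\<integral>y. F y \<partial>distr M N (B k))" using F by (simp add: integral_distr)
  also have "\<dots> = (\<integral>y. F y \<partial>distr M N (B 1))" using B_ident[OF assms(1)] by simp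
  also have "\<dots> = (\<integral>x. F (B 1 x) \<partial>M)" using F by (simp add: integral_distr)
  finally show "(\<integral>x. F (B k x) \<partial>M) = (\<integral>x. F (B 1 x) \<partial>M)" .
  have "integrable M (\<lambda>x. F (B k x)) \<longleftrightarrow> integrable (distr M N (B k)) F" using F by (simp add: integrable_distr_eq)
  also have "\<dots> \<longleftrightarrow> integrable (distr M N (B 1)) F" using B_ident[OF assms(1)] by simp
  also have "\<dots> \<longleftrightarrow> integrable M (\<lambda>x. F (B 1 x))" using F by (simp add: integrable_distr_eq)
  finally show "integrable M (\<lambda>x. F (B k x)) \<longleftrightarrow> integrable M (\<lambda>x. F (B 1 x))" .
qed

end

context setting begin

abbreviation "Bd \<equiv> bind (distr M N (B 1)) (\<lambda>b. distr (\<kappa> b) (borel \<Otimes>\<^sub>M borel) (\<lambda>d. (w b, d)))"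

lemma mom_conv:
  fixes g :: "real \<Rightarrow> real \<Rightarrow> real"
  assumes g[measurable]: "(\<lambda>(a, d). g a d) \<in> borel_measurable (borel \<Otimes>\<^sub>M borel)"
    and int: "integrable Bd (\<lambda>(a, d). g a d)"
  shows "(\<integral>\<^sup>+x. \<integral>\<^sup>+d. ennreal \<bar>g (w (B 1 x)) d\<bar> \<partial>\<kappa> (B 1 x) \<partial>M) < \<infinity>"
proof -
  have Km: "(\<lambda>b. distr (\<kappa> b) (borel \<Otimes>\<^sub>M borel) (\<lambda>d. (w b, d))) \<in> measurable N (subprob_algebra (borel \<Otimes>\<^sub>M borel))"
  proof (rule measurable_distr2[where M=borel])
    show "(\<lambda>(b, d). (w b, d)) \<in> measurable (N \<Otimes>\<^sub>M borel) (borel \<Otimes>\<^sub>M borel)" by measurable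
    show "\<kappa> \<in> measurable N (subprob_algebra borel)" by (rule measurable_prob_algebraD) measurable
  qed
  have Km': "(\<lambda>b. distr (\<kappa> b) (borel \<Otimes>\<^sub>M borel) (\<lambda>d. (w b, d))) \<in> measurable (distr M N (B 1)) (subprob_algebra (borel \<Otimes>\<^sub>M borel))"
    using Km by (subst measurable_cong_sets[OF sets_distr refl])
  have gm: "(\<lambda>z. ennreal (norm (case z of (a, d) \<Rightarrow> g a d))) \<in> borel_measurable (borel \<Otimes>\<^sub>M borel)" by measurable
  have "(\<integral>\<^sup>+z. ennreal (norm (case z of (a, d) \<Rightarrow> g a d)) \<partial>Bd) < \<infinity>"
    using int by (simp add: integrable_iff_bounded)
  also have "(\<integral>\<^sup>+z. ennreal (norm (case z of (a, d) \<Rightarrow> g a d)) \<partial>Bd)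
    = (\<integral>\<^sup>+b. \<integral>\<^sup>+z. ennreal (norm (case z of (a, d) \<Rightarrow> g a d)) \<partial>distr (\<kappa> b) (borel \<Otimes>\<^sub>M borel) (\<lambda>d. (w b, d)) \<partial>distr M N (B 1))"
    by (rule nn_integral_bind[OF gm Km'])
  also have "\<dots> = (\<integral>\<^sup>+b. \<integral>\<^sup>+d. ennreal \<bar>g (w b) d\<bar> \<partial>\<kappa> b \<partial>distr M N (B 1))"
  proof (intro nn_integral_cong)
    fix b assume "b \<in> space (distr M N (B 1))"
    then have b: "b \<in> space N" by simp
    have "(\<lambda>d. (w b, d)) \<in> measurable (\<kappa> b) (borel \<Otimes>\<^sub>M borel)"
      by (subst measurable_cong_sets[OF kappa_sets[OF b] refl]) measurable
    then have wbd: "(\<lambda>d. (w b, d)) \<in> measurable (\<kappa> b) (borel \<Otimes>\<^sub>M borel)" .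
    show "(\<integral>\<^sup>+z. ennreal (norm (case z of (a, d) \<Rightarrow> g a d)) \<partial>distr (\<kappa> b) (borel \<Otimes>\<^sub>M borel) (\<lambda>d. (w b, d)))
        = (\<integral>\<^sup>+d. ennreal \<bar>g (w b) d\<bar> \<partial>\<kappa> b)"
    proof (subst nn_integral_distr)
      show "(\<lambda>z. ennreal (norm (case z of (a, d) \<Rightarrow> g a d))) \<in> borel_measurable (distr (\<kappa> b) (borel \<Otimes>\<^sub>M borel) (\<lambda>d. (w b, d)))"
        by (subst measurable_cong_sets[OF sets_distr refl]) (rule gm)
    qed (use wbd in auto)
  qed
  also have "\<dots> = (\<integral>\<^sup>+x. \<integral>\<^sup>+d. ennreal \<bar>g (w (B 1 x)) d\<bar> \<partial>\<kappa> (B 1 x) \<partial>M)"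
  proof (rule nn_integral_distr)
    have "(\<lambda>b. \<integral>\<^sup>+d. ennreal \<bar>g (w b) d\<bar> \<partial>\<kappa> b) \<in> borel_measurable N"
    proof (rule nn_integral_measurable_subprob_algebra2[where N=borel])
      show "(\<lambda>(b, d). ennreal \<bar>g (w b) d\<bar>) \<in> borel_measurable (N \<Otimes>\<^sub>M borel)" by measurable
      show "\<kappa> \<in> measurable N (subprob_algebra borel)" by (rule measurable_prob_algebraD[OF kappa_meas])
    qed
    then show "(\<lambda>b. \<integral>\<^sup>+d. ennreal \<bar>g (w b) d\<bar> \<partial>\<kappa> b) \<in> borel_measurable (distr M N (B 1))"
      by (subst measurable_cong_sets[OF sets_distr refl])
  qed simp
  finally show ?thesis .
qed

end

context setting begin

lemma pw_bound:
  fixes a d :: real assumes a: "0 \<le> a" and j: "j \<le> 2"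
  shows "a ^ j * \<bar>d\<bar> \<le> 1 + a\<^sup>2 + d\<^sup>2 + (a * d)\<^sup>2"
proof -
  have d1: "\<bar>d\<bar> \<le> 1 + d\<^sup>2"
  proof (cases "\<bar>d\<bar> \<le> 1")
    case True then show ?thesis by (simp add: add_increasing2)
  next
    case False then have "\<bar>d\<bar> * 1 \<le> \<bar>d\<bar> * \<bar>d\<bar>" by (intro mult_left_mono) auto
    then show ?thesis by (simp add: power2_eq_square abs_mult_self_eq)
  qed
  consider "j = 0" | "j = 1" | "j = 2" using j by linarith
  then show ?thesis
  proof cases
    case 1
    then have "a ^ j * \<bar>d\<bar> = \<bar>d\<bar>" by simp
    then show ?thesis using d1 zero_le_power2[of a] zero_le_power2[of "a*d"] by linarith
  next
    case 2
    have "0 \<le> (a - \<bar>d\<bar>)\<^sup>2" by simp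
    then have "2 * (a * \<bar>d\<bar>) \<le> a\<^sup>2 + d\<^sup>2" by (simp add: power2_eq_square algebra_simps)
    moreover have "0 \<le> a * \<bar>d\<bar>" using a by simp
    moreover have "a ^ j * \<bar>d\<bar> = a * \<bar>d\<bar>" using 2 by simp
    ultimately show ?thesis using zero_le_power2[of "a*d"] by linarith
  next
    case 3
    have "a\<^sup>2 * \<bar>d\<bar> \<le> a\<^sup>2 * (1 + d\<^sup>2)" using d1 by (simp add: mult_left_mono)
    moreover have "a ^ j * \<bar>d\<bar> = a\<^sup>2 * \<bar>d\<bar>" "(a * d)\<^sup>2 = a\<^sup>2 * d\<^sup>2" using 3 by (simp_all add: power_mult_distrib)
    ultimately show ?thesis using zero_le_power2[of d] by (simp only: distrib_left mult_1_right)
  qed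
qed

lemma finite_nn_double:
  fixes g :: "real \<Rightarrow> real \<Rightarrow> real"
  assumes g[measurable]: "(\<lambda>(a, d). g a d) \<in> borel_measurable (borel \<Otimes>\<^sub>M borel)"
  shows "(\<lambda>x. \<integral>\<^sup>+d. ennreal \<bar>g (w (B 1 x)) d\<bar> \<partial>\<kappa> (B 1 x)) \<in> borel_measurable M"
proof -
  have "(\<lambda>b. \<integral>\<^sup>+d. ennreal \<bar>g (w b) d\<bar> \<partial>\<kappa> b) \<in> borel_measurable N"
  proof (rule nn_integral_measurable_subprob_algebra2[where N=borel])
    show "(\<lambda>(b, d). ennreal \<bar>g (w b) d\<bar>) \<in> borel_measurable (N \<Otimes>\<^sub>M borel)" by measurable
    show "\<kappa> \<in> measurable N (subprob_algebra borel)" by (rule measurable_prob_algebraD[OF kappa_meas])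
  qed
  then show ?thesis by measurable
qed

lemma inner_bound:
  assumes b: "b \<in> space N" and j: "j \<le> 2"
  shows "ennreal (w b ^ j) * mm b \<le> 1 + (\<integral>\<^sup>+d. ennreal \<bar>(w b)\<^sup>2\<bar> \<partial>\<kappa> b) + (\<integral>\<^sup>+d. ennreal \<bar>d\<^sup>2\<bar> \<partial>\<kappa> b)
            + (\<integral>\<^sup>+d. ennreal \<bar>(w b * d)\<^sup>2\<bar> \<partial>\<kappa> b)"
proof -
    interpret K: prob_space "\<kappa> (b)" by (rule kappa_prob[OF b])
    have w0: "0 \<le> w (b)" using w_nonneg[OF b] .
    have ms[measurable_cong]: "sets (\<kappa> (b)) = sets borel" by (rule kappa_sets[OF b])
    have "ennreal (w (b) ^ j) * mm (b) = (\<integral>\<^sup>+d. ennreal (w (b) ^ j * \<bar>d\<bar>) \<partial>\<kappa> (b))"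
    proof -
      have am: "abs \<in> borel_measurable (\<kappa> (b))" by (subst measurable_cong_sets[OF ms refl]) measurable
      have am2: "(\<lambda>d. ennreal \<bar>d\<bar>) \<in> borel_measurable (\<kappa> (b))" by (subst measurable_cong_sets[OF ms refl]) measurable
      show ?thesis
        unfolding mm_def by (subst nn_integral_cmult[symmetric, OF am2]) (simp add: ennreal_mult'' w0)
    qed
    also have "\<dots> \<le> (\<integral>\<^sup>+d. 1 + ennreal \<bar>(w (b))\<^sup>2\<bar> + ennreal \<bar>d\<^sup>2\<bar> + ennreal \<bar>(w (b) * d)\<^sup>2\<bar> \<partial>\<kappa> (b))"
    proof (intro nn_integral_mono)
      fix d
      have "ennreal (w (b) ^ j * \<bar>d\<bar>) \<le> ennreal (1 + (w (b))\<^sup>2 + d\<^sup>2 + (w (b) * d)\<^sup>2)"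
        using pw_bound[OF w0 j] by (rule ennreal_leI)
      also have "\<dots> = 1 + ennreal \<bar>(w (b))\<^sup>2\<bar> + ennreal \<bar>d\<^sup>2\<bar> + ennreal \<bar>(w (b) * d)\<^sup>2\<bar>"
      proof -
        have p1: "0 \<le> 1 + (w (b))\<^sup>2" "0 \<le> 1 + (w (b))\<^sup>2 + d\<^sup>2" by (simp_all add: add_nonneg_nonneg)
        show ?thesis
          by (subst ennreal_plus[OF p1(2)], simp, subst ennreal_plus[OF p1(1)], simp, subst ennreal_plus, simp_all)
      qed
      finally show "ennreal (w (b) ^ j * \<bar>d\<bar>) \<le> 1 + ennreal \<bar>(w (b))\<^sup>2\<bar> + ennreal \<bar>d\<^sup>2\<bar> + ennreal \<bar>(w (b) * d)\<^sup>2\<bar>" .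
    qed
    also have "\<dots> = 1 + (\<integral>\<^sup>+d. ennreal \<bar>(w (b))\<^sup>2\<bar> \<partial>\<kappa> (b)) + (\<integral>\<^sup>+d. ennreal \<bar>d\<^sup>2\<bar> \<partial>\<kappa> (b))
            + (\<integral>\<^sup>+d. ennreal \<bar>(w (b) * d)\<^sup>2\<bar> \<partial>\<kappa> (b))"
    proof -
      have m1: "(\<lambda>d. ennreal \<bar>(w b)\<^sup>2\<bar>) \<in> borel_measurable (\<kappa> b)" by simp
      have m2: "(\<lambda>d. ennreal \<bar>d\<^sup>2\<bar>) \<in> borel_measurable (\<kappa> b)" by (subst measurable_cong_sets[OF ms refl]) measurable
      have m3: "(\<lambda>d. ennreal \<bar>(w b * d)\<^sup>2\<bar>) \<in> borel_measurable (\<kappa> b)" by (subst measurable_cong_sets[OF ms refl]) measurable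
      have "(\<integral>\<^sup>+d. 1 + ennreal \<bar>(w b)\<^sup>2\<bar> + ennreal \<bar>d\<^sup>2\<bar> + ennreal \<bar>(w b * d)\<^sup>2\<bar> \<partial>\<kappa> b)
          = (\<integral>\<^sup>+d. 1 + ennreal \<bar>(w b)\<^sup>2\<bar> + ennreal \<bar>d\<^sup>2\<bar> \<partial>\<kappa> b) + (\<integral>\<^sup>+d. ennreal \<bar>(w b * d)\<^sup>2\<bar> \<partial>\<kappa> b)"
        using m1 m2 m3 by (intro nn_integral_add) auto
      also have "\<dots> = ((\<integral>\<^sup>+d. 1 + ennreal \<bar>(w b)\<^sup>2\<bar> \<partial>\<kappa> b) + (\<integral>\<^sup>+d. ennreal \<bar>d\<^sup>2\<bar> \<partial>\<kappa> b)) + (\<integral>\<^sup>+d. ennreal \<bar>(w b * d)\<^sup>2\<bar> \<partial>\<kappa> b)"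
        using m1 m2 by (subst nn_integral_add) auto
      also have "\<dots> = ((1 + (\<integral>\<^sup>+d. ennreal \<bar>(w b)\<^sup>2\<bar> \<partial>\<kappa> b)) + (\<integral>\<^sup>+d. ennreal \<bar>d\<^sup>2\<bar> \<partial>\<kappa> b)) + (\<integral>\<^sup>+d. ennreal \<bar>(w b * d)\<^sup>2\<bar> \<partial>\<kappa> b)"
        using K.emeasure_space_1 by simp
      finally show ?thesis .
    qed
    finally show ?thesis .
qed

lemma mm_mom_finite:
  assumes j: "j \<le> 2"
  shows "(\<integral>\<^sup>+x. ennreal (w (B 1 x) ^ j) * mm (B 1 x) \<partial>M) < \<infinity>"
proof -
  have I2: "(\<integral>\<^sup>+x. \<integral>\<^sup>+d. ennreal \<bar>(w (B 1 x))\<^sup>2\<bar> \<partial>\<kappa> (B 1 x) \<partial>M) < \<infinity>"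
    by (rule mom_conv[OF _ mom1]) measurable
  have I3: "(\<integral>\<^sup>+x. \<integral>\<^sup>+d. ennreal \<bar>d\<^sup>2\<bar> \<partial>\<kappa> (B 1 x) \<partial>M) < \<infinity>"
    by (rule mom_conv[OF _ mom4]) measurable
  have I4: "(\<integral>\<^sup>+x. \<integral>\<^sup>+d. ennreal \<bar>(w (B 1 x) * d)\<^sup>2\<bar> \<partial>\<kappa> (B 1 x) \<partial>M) < \<infinity>"
    by (rule mom_conv[OF _ mom2]) measurable
  have m2: "(\<lambda>x. \<integral>\<^sup>+d. ennreal \<bar>(w (B 1 x))\<^sup>2\<bar> \<partial>\<kappa> (B 1 x)) \<in> borel_measurable M"
    by (rule finite_nn_double[where g="\<lambda>a d. a\<^sup>2"]) measurable
  have m3: "(\<lambda>x. \<integral>\<^sup>+d. ennreal \<bar>d\<^sup>2\<bar> \<partial>\<kappa> (B 1 x)) \<in> borel_measurable M"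
    by (rule finite_nn_double[where g="\<lambda>a d. d\<^sup>2"]) measurable
  have m4: "(\<lambda>x. \<integral>\<^sup>+d. ennreal \<bar>(w (B 1 x) * d)\<^sup>2\<bar> \<partial>\<kappa> (B 1 x)) \<in> borel_measurable M"
    by (rule finite_nn_double[where g="\<lambda>a d. (a * d)\<^sup>2"]) measurable
  have "(\<integral>\<^sup>+x. ennreal (w (B 1 x) ^ j) * mm (B 1 x) \<partial>M)
      \<le> (\<integral>\<^sup>+x. 1 + (\<integral>\<^sup>+d. ennreal \<bar>(w (B 1 x))\<^sup>2\<bar> \<partial>\<kappa> (B 1 x)) + (\<integral>\<^sup>+d. ennreal \<bar>d\<^sup>2\<bar> \<partial>\<kappa> (B 1 x))
            + (\<integral>\<^sup>+d. ennreal \<bar>(w (B 1 x) * d)\<^sup>2\<bar> \<partial>\<kappa> (B 1 x)) \<partial>M)"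
  proof (intro nn_integral_mono)
    fix x assume x: "x \<in> space M"
    have b: "B 1 x \<in> space N" using x measurable_space[OF B_meas] by auto
    show "ennreal (w (B 1 x) ^ j) * mm (B 1 x) \<le> 1 + (\<integral>\<^sup>+d. ennreal \<bar>(w (B 1 x))\<^sup>2\<bar> \<partial>\<kappa> (B 1 x)) + (\<integral>\<^sup>+d. ennreal \<bar>d\<^sup>2\<bar> \<partial>\<kappa> (B 1 x))
            + (\<integral>\<^sup>+d. ennreal \<bar>(w (B 1 x) * d)\<^sup>2\<bar> \<partial>\<kappa> (B 1 x))" by (rule inner_bound[OF b j])

  qed
  also have "\<dots> = 1 + (\<integral>\<^sup>+x. \<integral>\<^sup>+d. ennreal \<bar>(w (B 1 x))\<^sup>2\<bar> \<partial>\<kappa> (B 1 x) \<partial>M) + (\<integral>\<^sup>+x. \<integral>\<^sup>+d. ennreal \<bar>d\<^sup>2\<bar> \<partial>\<kappa> (B 1 x) \<partial>M)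
            + (\<integral>\<^sup>+x. \<integral>\<^sup>+d. ennreal \<bar>(w (B 1 x) * d)\<^sup>2\<bar> \<partial>\<kappa> (B 1 x) \<partial>M)"
    using m2 m3 m4 by (simp add: nn_integral_add emeasure_space_1)
  also have "\<dots> < \<infinity>" using I2 I3 I4 by (simp add: ennreal_add_less_top)
  finally show ?thesis .
qed

end

context setting begin

definition "AA j = (\<integral>\<^sup>+x. ennreal (w (B 1 x) ^ j) * mm (B 1 x) \<partial>M)"
definition "Tr k r = (\<Sum>i\<in>{1..<k}. w (r i))"

lemma restr_meas[measurable]: "(\<lambda>x. \<lambda>i\<in>{..<k}. B i x) \<in> measurable M (PiM {..<k} (\<lambda>_. N))"
  by measurable

lemma Tr_meas[measurable]: "Tr k \<in> borel_measurable (PiM {..<k} (\<lambda>_. N))"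
proof -
  have "(\<lambda>r. w (r i)) \<in> borel_measurable (PiM {..<k} (\<lambda>_. N))" if "i \<in> {1..<k}" for i
  proof -
    have "(\<lambda>r. r i) \<in> measurable (PiM {..<k} (\<lambda>_. N)) N" using that by (intro measurable_component_singleton) auto
    from measurable_compose[OF this w_meas] show ?thesis .
  qed
  then show ?thesis unfolding Tr_def by (intro borel_measurable_sum) auto
qed

lemma comp0_meas: "(k::nat) \<ge> 1 \<Longrightarrow> (\<lambda>r. w (r 0)) \<in> borel_measurable (PiM {..<k} (\<lambda>_. N))"
proof -
  assume "k \<ge> 1"
  then have "(\<lambda>r. r 0) \<in> measurable (PiM {..<k} (\<lambda>_. N)) N" by (intro measurable_component_singleton) auto
  from measurable_compose[OF this w_meas] show ?thesis .
qed

lemma term_int: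
  assumes k: "k \<ge> 1" and G: "G \<in> borel_measurable (PiM {..<k} (\<lambda>_. N))"
  shows "(\<integral>\<^sup>+x. ennreal c * (ennreal (w (B k x) ^ j) * mm (B k x) * G (\<lambda>i\<in>{..<k}. B i x)) \<partial>M)
       = ennreal c * AA j * (\<integral>\<^sup>+x. G (\<lambda>i\<in>{..<k}. B i x) \<partial>M)"
proof -
  have F: "(\<lambda>b. ennreal (w b ^ j) * mm b) \<in> borel_measurable N" by measurable
  have "(\<integral>\<^sup>+x. ennreal c * (ennreal (w (B k x) ^ j) * mm (B k x) * G (\<lambda>i\<in>{..<k}. B i x)) \<partial>M)
      = ennreal c * (\<integral>\<^sup>+x. ennreal (w (B k x) ^ j) * mm (B k x) * G (\<lambda>i\<in>{..<k}. B i x) \<partial>M)"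
    using measurable_compose[OF restr_meas G] by (intro nn_integral_cmult) measurable
  also have "(\<integral>\<^sup>+x. ennreal (w (B k x) ^ j) * mm (B k x) * G (\<lambda>i\<in>{..<k}. B i x) \<partial>M)
      = (\<integral>\<^sup>+x. ennreal (w (B k x) ^ j) * mm (B k x) \<partial>M) * (\<integral>\<^sup>+x. G (\<lambda>i\<in>{..<k}. B i x) \<partial>M)"
    using indep_factor[OF F G] by simp
  also have "(\<integral>\<^sup>+x. ennreal (w (B k x) ^ j) * mm (B k x) \<partial>M) = AA j"
    unfolding AA_def using same_law[OF k F] by simp
  finally show ?thesis by (simp only: mult.assoc)
qed

lemma sum_split: "k \<ge> 1 \<Longrightarrow> (\<Sum>i\<le>k. f i) = f k + (f 0 + (\<Sum>i\<in>{1..<k}. f i))" for f :: "nat \<Rightarrow> real"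
proof -
  assume k: "k \<ge> 1"
  have "{..k} = insert k (insert 0 {1..<k})" using k by auto
  then show ?thesis using k by (simp add: sum.insert)
qed

definition "Rb k r = (3 * (w (r k))\<^sup>2 + 2 * mu * w (r k) + 2 * w (r k) * (w (r 0) + mu0)
     + w (r k) * ((Tr k r - real (k - 1) * mu)\<^sup>2 / sqrt (ee k) + sqrt (ee k))) / (ee k)\<^sup>2
     + (if Tr k r < ee k / 2 then 1 else 0)"

lemma pointwise:
  assumes k: "k \<ge> 1" and x: "x \<in> space M"
  shows "Qex (ee k) (w (B k x)) (\<Sum>i\<le>k. w (B i x)) (pp k (\<lambda>i. B i x)) (qq k (\<lambda>i. B i x)) \<le> Rb k (\<lambda>i. B i x)"
proof -
  have b: "\<And>i. B i x \<in> space N" using x measurable_space[OF B_meas] by auto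
  have T0: "0 \<le> Tr k (\<lambda>i. B i x)" unfolding Tr_def by (intro sum_nonneg w_nonneg b)
  have e: "ee k = real (k - 1) * mu + mu + mu0" using k by (simp add: ee_def of_nat_diff algebra_simps)
  have s: "(\<Sum>i\<le>k. w (B i x)) = w (B k x) + w (B 0 x) + Tr k (\<lambda>i. B i x)"
    using sum_split[OF k, of "\<lambda>i. w (B i x)"] by (simp add: Tr_def)
  show ?thesis
    unfolding pp_def qq_def Rb_def s
    using Qex_bound[OF e ee_pos w_nonneg[OF b] W0_pos[OF x] T0 less_imp_le[OF mu_pos] less_imp_le[OF mu0_pos]]
      mu_pos by (simp add: s)
qed

end

context setting begin

definition "G2 r = ennreal (w (r 0) + mu0)"
definition "G3 k r = ennreal ((Tr k r - real (k - 1) * mu)\<^sup>2)"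
definition "G4 k r = ennreal (if Tr k r < ee k / 2 then 1 else 0)"

lemma G2_meas: "(k::nat) \<ge> 1 \<Longrightarrow> G2 \<in> borel_measurable (PiM {..<k} (\<lambda>_. N))"
proof -
  assume k: "k \<ge> 1"
  have "(\<lambda>r. w (r 0) + mu0) \<in> borel_measurable (PiM {..<k} (\<lambda>_. N))"
    using comp0_meas[OF k] by (intro borel_measurable_add) auto
  from measurable_compose[OF this measurable_ennreal] show ?thesis unfolding G2_def .
qed
lemma G3_meas: "G3 k \<in> borel_measurable (PiM {..<k} (\<lambda>_. N))"
  unfolding G3_def by measurable
lemma G4_meas: "G4 k \<in> borel_measurable (PiM {..<k} (\<lambda>_. N))"
  unfolding G4_def by measurable
lemma G1_meas: "(\<lambda>r. 1::ennreal) \<in> borel_measurable (PiM {..<k} (\<lambda>_. N))" by simp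

lemma ennreal_sum5:
  fixes a b c d e :: real
  assumes "0 \<le> a" "0 \<le> b" "0 \<le> c" "0 \<le> d" "0 \<le> e"
  shows "ennreal (a + b + c + d + e) = ennreal a + ennreal b + ennreal c + ennreal d + ennreal e"
proof -
  have "ennreal (a + b + c + d + e) = ennreal (a + b + c + d) + ennreal e" using assms by (intro ennreal_plus) auto
  also have "ennreal (a + b + c + d) = ennreal (a + b + c) + ennreal d" using assms by (intro ennreal_plus) auto
  also have "ennreal (a + b + c) = ennreal (a + b) + ennreal c" using assms by (intro ennreal_plus) auto
  also have "ennreal (a + b) = ennreal a + ennreal b" using assms by (intro ennreal_plus) auto
  finally show ?thesis .
qed

lemma per_k_bound:
  assumes k: "k \<ge> 1" and kn: "k < n"
  shows "(\<integral>\<^sup>+x. ennreal \<bar>J n k x * D n k x - Ifun (ee k) (w (B k x)) (\<Sum>i\<le>k. w (B i x)) (J n k x) (H n k x) * D n k x\<bar> \<partial>M)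
    \<le> ennreal (3 / (ee k)\<^sup>2) * AA 2 + ennreal ((2 * mu + sqrt (ee k)) / (ee k)\<^sup>2) * AA 1
      + ennreal (2 / (ee k)\<^sup>2) * AA 1 * (\<integral>\<^sup>+x. G2 (\<lambda>i\<in>{..<k}. B i x) \<partial>M)
      + ennreal (1 / (sqrt (ee k) * (ee k)\<^sup>2)) * AA 1 * (\<integral>\<^sup>+x. G3 k (\<lambda>i\<in>{..<k}. B i x) \<partial>M)
      + ennreal 1 * AA 0 * (\<integral>\<^sup>+x. G4 k (\<lambda>i\<in>{..<k}. B i x) \<partial>M)"
proof -
  let ?r = "\<lambda>x. \<lambda>i\<in>{..<k}. B i x"
  let ?e = "ee k"
  define t1 where "t1 x = ennreal (3 / ?e\<^sup>2) * (ennreal (w (B k x) ^ 2) * mm (B k x) * 1)" for x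
  define t2 where "t2 x = ennreal ((2 * mu + sqrt ?e) / ?e\<^sup>2) * (ennreal (w (B k x) ^ 1) * mm (B k x) * 1)" for x
  define t3 where "t3 x = ennreal (2 / ?e\<^sup>2) * (ennreal (w (B k x) ^ 1) * mm (B k x) * G2 (?r x))" for x
  define t4 where "t4 x = ennreal (1 / (sqrt ?e * ?e\<^sup>2)) * (ennreal (w (B k x) ^ 1) * mm (B k x) * G3 k (?r x))" for x
  define t5 where "t5 x = ennreal 1 * (ennreal (w (B k x) ^ 0) * mm (B k x) * G4 k (?r x))" for x
  have e: "?e > 0" by (rule ee_pos)
  have pw: "ennreal (Qex (ee k) (w (B k x)) (\<Sum>i\<le>k. w (B i x)) (pp k (\<lambda>i. B i x)) (qq k (\<lambda>i. B i x))) * mm (B k x)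
      \<le> t1 x + t2 x + t3 x + t4 x + t5 x" if x: "x \<in> space M" for x
  proof -
    have b: "\<And>i. B i x \<in> space N" using x measurable_space[OF B_meas] by auto
    define W where "W = w (B k x)"
    define W0 where "W0 = w (B 0 x)"
    define T where "T = Tr k (\<lambda>i. B i x)"
    have W: "0 \<le> W" unfolding W_def by (rule w_nonneg[OF b])
    have W0: "0 \<le> W0" unfolding W0_def using W0_pos[OF x] by simp
    have Tr_r: "Tr k (?r x) = T" unfolding T_def Tr_def by (intro sum.cong) auto
    have r0: "?r x 0 = B 0 x" using k by simp
    have mu: "0 \<le> mu" "0 \<le> mu0" using mu_pos mu0_pos by auto
    have Rb: "Rb k (\<lambda>i. B i x) = 3 / ?e\<^sup>2 * W\<^sup>2 + (2 * mu + sqrt ?e) / ?e\<^sup>2 * W + 2 / ?e\<^sup>2 * (W * (W0 + mu0))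
       + 1 / (sqrt ?e * ?e\<^sup>2) * (W * (T - real (k - 1) * mu)\<^sup>2) + (if T < ?e / 2 then 1 else 0)"
      unfolding Rb_def W_def[symmetric] W0_def[symmetric] T_def[symmetric]
      using e by (simp add: field_simps power2_eq_square)
    have "ennreal (Qex (ee k) (w (B k x)) (\<Sum>i\<le>k. w (B i x)) (pp k (\<lambda>i. B i x)) (qq k (\<lambda>i. B i x))) * mm (B k x)
        \<le> ennreal (Rb k (\<lambda>i. B i x)) * mm (B k x)"
      by (intro mult_right_mono ennreal_leI pointwise k x) simp
    also have "ennreal (Rb k (\<lambda>i. B i x)) = ennreal (3 / ?e\<^sup>2 * W\<^sup>2) + ennreal ((2 * mu + sqrt ?e) / ?e\<^sup>2 * W)
       + ennreal (2 / ?e\<^sup>2 * (W * (W0 + mu0))) + ennreal (1 / (sqrt ?e * ?e\<^sup>2) * (W * (T - real (k - 1) * mu)\<^sup>2))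
       + ennreal (if T < ?e / 2 then 1 else 0)"
      unfolding Rb using e W W0 mu by (intro ennreal_sum5) (auto intro!: mult_nonneg_nonneg divide_nonneg_nonneg add_nonneg_nonneg)
    also have "(ennreal (3 / ?e\<^sup>2 * W\<^sup>2) + ennreal ((2 * mu + sqrt ?e) / ?e\<^sup>2 * W)
       + ennreal (2 / ?e\<^sup>2 * (W * (W0 + mu0))) + ennreal (1 / (sqrt ?e * ?e\<^sup>2) * (W * (T - real (k - 1) * mu)\<^sup>2))
       + ennreal (if T < ?e / 2 then 1 else 0)) * mm (B k x) = t1 x + t2 x + t3 x + t4 x + t5 x"
    proof -
      have ie: "0 \<le> 3 / ?e\<^sup>2" "0 \<le> (2 * mu + sqrt ?e) / ?e\<^sup>2" "0 \<le> 2 / ?e\<^sup>2" "0 \<le> 1 / (sqrt ?e * ?e\<^sup>2)"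
        using e mu by auto
      have e1: "ennreal (3 / ?e\<^sup>2 * W\<^sup>2) * mm (B k x) = t1 x"
        unfolding t1_def W_def by (subst ennreal_mult[OF ie(1) zero_le_power2]) (simp add: mult.assoc)
      have e2: "ennreal ((2 * mu + sqrt ?e) / ?e\<^sup>2 * W) * mm (B k x) = t2 x"
        unfolding t2_def by (subst ennreal_mult[OF ie(2) W]) (simp add: W_def mult.assoc)
      have e3: "ennreal (2 / ?e\<^sup>2 * (W * (W0 + mu0))) * mm (B k x) = t3 x"
        unfolding t3_def G2_def r0 W0_def[symmetric] using ie W W0 mu
        by (subst ennreal_mult[OF ie(3)], simp, subst ennreal_mult[OF W], simp) (simp add: W_def mult_ac)
      have e4: "ennreal (1 / (sqrt ?e * ?e\<^sup>2) * (W * (T - real (k - 1) * mu)\<^sup>2)) * mm (B k x) = t4 x"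
        unfolding t4_def G3_def Tr_r using ie W
        by (subst ennreal_mult[OF ie(4)], simp, subst ennreal_mult[OF W], simp) (simp add: W_def mult_ac)
      have e5: "ennreal (if T < ?e / 2 then 1 else 0) * mm (B k x) = t5 x"
        unfolding t5_def G4_def Tr_r by simp
      show ?thesis by (simp only: distrib_right e1 e2 e3 e4 e5)
    qed
    finally show ?thesis .
  qed
  have m: "\<And>j. (\<lambda>x. ennreal (w (B k x) ^ j) * mm (B k x)) \<in> borel_measurable M" by measurable
  have mG2: "(\<lambda>x. G2 (?r x)) \<in> borel_measurable M" using measurable_compose[OF restr_meas G2_meas[OF k]] .
  have mG3: "(\<lambda>x. G3 k (?r x)) \<in> borel_measurable M" using measurable_compose[OF restr_meas G3_meas] .
  have mG4: "(\<lambda>x. G4 k (?r x)) \<in> borel_measurable M" using measurable_compose[OF restr_meas G4_meas] .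
  have mt: "t1 \<in> borel_measurable M" "t2 \<in> borel_measurable M" "t3 \<in> borel_measurable M" "t4 \<in> borel_measurable M" "t5 \<in> borel_measurable M"
    unfolding t1_def t2_def t3_def t4_def t5_def using m mG2 mG3 mG4 by measurable
  have "(\<integral>\<^sup>+x. ennreal \<bar>J n k x * D n k x - Ifun (ee k) (w (B k x)) (\<Sum>i\<le>k. w (B i x)) (J n k x) (H n k x) * D n k x\<bar> \<partial>M)
      = (\<integral>\<^sup>+x. ennreal (Qex (ee k) (w (B k x)) (\<Sum>i\<le>k. w (B i x)) (pp k (\<lambda>i. B i x)) (qq k (\<lambda>i. B i x))) * mm (B k x) \<partial>M)"
    by (rule per_k[OF kn])
  also have "\<dots> \<le> (\<integral>\<^sup>+x. t1 x + t2 x + t3 x + t4 x + t5 x \<partial>M)"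
    by (intro nn_integral_mono pw)
  also have "\<dots> = (\<integral>\<^sup>+x. t1 x \<partial>M) + (\<integral>\<^sup>+x. t2 x \<partial>M) + (\<integral>\<^sup>+x. t3 x \<partial>M) + (\<integral>\<^sup>+x. t4 x \<partial>M) + (\<integral>\<^sup>+x. t5 x \<partial>M)"
    using mt by (simp add: nn_integral_add)
  also have "(\<integral>\<^sup>+x. t1 x \<partial>M) = ennreal (3 / ?e\<^sup>2) * AA 2 * (\<integral>\<^sup>+x. 1 \<partial>M)"
    unfolding t1_def by (rule term_int[OF k G1_meas])
  also have "(\<integral>\<^sup>+x. t2 x \<partial>M) = ennreal ((2 * mu + sqrt ?e) / ?e\<^sup>2) * AA 1 * (\<integral>\<^sup>+x. 1 \<partial>M)"
    unfolding t2_def by (rule term_int[OF k G1_meas])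
  also have "(\<integral>\<^sup>+x. t3 x \<partial>M) = ennreal (2 / ?e\<^sup>2) * AA 1 * (\<integral>\<^sup>+x. G2 (?r x) \<partial>M)"
    unfolding t3_def by (rule term_int[OF k G2_meas[OF k]])
  also have "(\<integral>\<^sup>+x. t4 x \<partial>M) = ennreal (1 / (sqrt ?e * ?e\<^sup>2)) * AA 1 * (\<integral>\<^sup>+x. G3 k (?r x) \<partial>M)"
    unfolding t4_def by (rule term_int[OF k G3_meas])
  also have "(\<integral>\<^sup>+x. t5 x \<partial>M) = ennreal 1 * AA 0 * (\<integral>\<^sup>+x. G4 k (?r x) \<partial>M)"
    unfolding t5_def by (rule term_int[OF k G4_meas])
  also have one: "(\<integral>\<^sup>+x. 1 \<partial>M) = 1" using emeasure_space_1 by simp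
  finally show ?thesis by (simp only: one mult_1_right)
qed

end

context setting begin

definition "E2 = expectation (\<lambda>x. (w (B 1 x))\<^sup>2)"

lemma W1_int: "integrable M (\<lambda>x. w (B 1 x))"
  using EW_pos not_integrable_integral_eq by fastforce

lemma W1sq_int: "integrable M (\<lambda>x. (w (B 1 x))\<^sup>2)"
proof -
  have f: "(\<integral>\<^sup>+x. \<integral>\<^sup>+d. ennreal \<bar>(w (B 1 x))\<^sup>2\<bar> \<partial>\<kappa> (B 1 x) \<partial>M) < \<infinity>"
    by (rule mom_conv[OF _ mom1]) measurable
  have "(\<integral>\<^sup>+x. \<integral>\<^sup>+d. ennreal \<bar>(w (B 1 x))\<^sup>2\<bar> \<partial>\<kappa> (B 1 x) \<partial>M) = (\<integral>\<^sup>+x. ennreal (norm ((w (B 1 x))\<^sup>2)) \<partial>M)"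
  proof (intro nn_integral_cong)
    fix x assume x: "x \<in> space M"
    have b: "B 1 x \<in> space N" using x measurable_space[OF B_meas] by auto
    interpret K: prob_space "\<kappa> (B 1 x)" by (rule kappa_prob[OF b])
    show "(\<integral>\<^sup>+d. ennreal \<bar>(w (B 1 x))\<^sup>2\<bar> \<partial>\<kappa> (B 1 x)) = ennreal (norm ((w (B 1 x))\<^sup>2))"
      using K.emeasure_space_1 by simp
  qed
  with f show ?thesis by (intro integrableI_bounded) auto
qed

lemma Wk_int: "k \<ge> 1 \<Longrightarrow> integrable M (\<lambda>x. w (B k x))"
  using same_law_integral(2)[of k w] W1_int by simp
lemma Wk_mean: "k \<ge> 1 \<Longrightarrow> expectation (\<lambda>x. w (B k x)) = mu"
  using same_law_integral(1)[of k w] by (simp add: mu_def)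
lemma Wksq_int: "k \<ge> 1 \<Longrightarrow> integrable M (\<lambda>x. (w (B k x))\<^sup>2)"
  using same_law_integral(2)[of k "\<lambda>b. (w b)\<^sup>2"] W1sq_int by simp
lemma Wksq_mean: "k \<ge> 1 \<Longrightarrow> expectation (\<lambda>x. (w (B k x))\<^sup>2) = E2"
  using same_law_integral(1)[of k "\<lambda>b. (w b)\<^sup>2"] by (simp add: E2_def)

lemma G2_int: "k \<ge> 1 \<Longrightarrow> (\<integral>\<^sup>+x. G2 (\<lambda>i\<in>{..<k}. B i x) \<partial>M) = ennreal (2 * mu0)"
proof -
  assume k: "k \<ge> 1"
  have "(\<integral>\<^sup>+x. G2 (\<lambda>i\<in>{..<k}. B i x) \<partial>M) = (\<integral>\<^sup>+x. ennreal (w (B 0 x) + mu0) \<partial>M)"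
    using k by (intro nn_integral_cong) (simp add: G2_def)
  also have "\<dots> = ennreal (\<integral>x. w (B 0 x) + mu0 \<partial>M)"
  proof (rule nn_integral_eq_integral)
    show "integrable M (\<lambda>x. w (B 0 x) + mu0)" using EW0_fin by simp
    show "AE x in M. 0 \<le> w (B 0 x) + mu0"
    proof (rule AE_I2)
      fix x assume "x \<in> space M" then show "0 \<le> w (B 0 x) + mu0" using W0_pos[of x] mu0_pos by linarith
    qed
  qed
  also have "(\<integral>x. w (B 0 x) + mu0 \<partial>M) = 2 * mu0"
    using EW0_fin by (simp add: mu0_def prob_space)
  finally show ?thesis .
qed

lemma indep_pair:
  assumes "i \<noteq> j" and f: "f \<in> borel_measurable N" and g: "g \<in> borel_measurable N"
  shows "indep_var borel (\<lambda>x. f (B i x) :: real) borel (\<lambda>x. g (B j x) :: real)"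
proof -
  have ind: "indep_var (PiM {i} (\<lambda>_. N)) (\<lambda>x. \<lambda>l\<in>{i}. B l x) (PiM {j} (\<lambda>_. N)) (\<lambda>x. \<lambda>l\<in>{j}. B l x)"
    by (rule indep_var_restrict[OF B_indep]) (use assms in auto)
  have f': "(\<lambda>r. f (r i)) \<in> borel_measurable (PiM {i} (\<lambda>_. N))" using f by measurable
  have g': "(\<lambda>r. g (r j)) \<in> borel_measurable (PiM {j} (\<lambda>_. N))" using g by measurable
  from indep_var_compose[OF ind f' g'] show ?thesis by (simp add: comp_def)
qed

end

context setting begin

lemma Yint: "i \<ge> 1 \<Longrightarrow> integrable M (\<lambda>x. w (B i x) - mu)"
  using Wk_int by simp

lemma Ymean: "i \<ge> 1 \<Longrightarrow> expectation (\<lambda>x. w (B i x) - mu) = 0"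
  using Wk_int Wk_mean by (simp add: prob_space)

lemma Ysq: "i \<ge> 1 \<Longrightarrow> integrable M (\<lambda>x. (w (B i x) - mu) * (w (B i x) - mu))
   \<and> expectation (\<lambda>x. (w (B i x) - mu) * (w (B i x) - mu)) = E2 - mu\<^sup>2"
proof -
  assume i: "i \<ge> 1"
  have eq: "(\<lambda>x. (w (B i x) - mu) * (w (B i x) - mu)) = (\<lambda>x. (w (B i x))\<^sup>2 - 2 * mu * w (B i x) + mu\<^sup>2)"
    by (simp add: power2_eq_square algebra_simps)
  have int: "integrable M (\<lambda>x. (w (B i x))\<^sup>2 - 2 * mu * w (B i x) + mu\<^sup>2)"
    using Wksq_int[OF i] Wk_int[OF i] by simp
  have "expectation (\<lambda>x. (w (B i x))\<^sup>2 - 2 * mu * w (B i x) + mu\<^sup>2) = E2 - 2 * mu * mu + mu\<^sup>2"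
    using Wksq_int[OF i] Wk_int[OF i] Wksq_mean[OF i] Wk_mean[OF i] by (simp add: prob_space)
  then show ?thesis unfolding eq using int by (simp add: power2_eq_square)
qed

lemma E2_ge: "mu\<^sup>2 \<le> E2"
proof -
  have "0 \<le> expectation (\<lambda>x. (w (B 1 x) - mu) * (w (B 1 x) - mu))" by (intro integral_nonneg_AE) auto
  moreover have "expectation (\<lambda>x. (w (B 1 x) - mu) * (w (B 1 x) - mu)) = E2 - mu\<^sup>2"
    using Ysq[of 1, OF order_refl] by blast
  ultimately show ?thesis by linarith
qed

lemma Ycross: "i \<ge> 1 \<Longrightarrow> j \<ge> 1 \<Longrightarrow> i \<noteq> j \<Longrightarrow> integrable M (\<lambda>x. (w (B i x) - mu) * (w (B j x) - mu))
   \<and> expectation (\<lambda>x. (w (B i x) - mu) * (w (B j x) - mu)) = 0"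
proof -
  assume ij: "i \<ge> 1" "j \<ge> 1" "i \<noteq> j"
  have ind: "indep_var borel (\<lambda>x. w (B i x) - mu) borel (\<lambda>x. w (B j x) - mu)"
    using indep_pair[OF ij(3), of "\<lambda>b. w b - mu" "\<lambda>b. w b - mu"] by simp
  show ?thesis
    using indep_var_lebesgue_integral[OF ind Yint[OF ij(1)] Yint[OF ij(2)]]
      indep_var_integrable[OF ind Yint[OF ij(1)] Yint[OF ij(2)]] Ymean[OF ij(1)] Ymean[OF ij(2)] by simp
qed

lemma G3_int: "k \<ge> 1 \<Longrightarrow> (\<integral>\<^sup>+x. G3 k (\<lambda>i\<in>{..<k}. B i x) \<partial>M) = ennreal (real (k - 1) * (E2 - mu\<^sup>2))"
proof -
  assume k: "k \<ge> 1"
  let ?I = "{1..<k}"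
  have eqT: "(Tr k (\<lambda>i\<in>{..<k}. B i x) - real (k - 1) * mu)\<^sup>2
      = (\<Sum>i\<in>?I. \<Sum>j\<in>?I. (w (B i x) - mu) * (w (B j x) - mu))" for x
  proof -
    have "Tr k (\<lambda>i\<in>{..<k}. B i x) - real (k - 1) * mu = (\<Sum>i\<in>?I. (w (B i x) - mu))"
      unfolding Tr_def by (simp add: sum_subtractf)
    then show ?thesis by (simp add: power2_eq_square sum_product)
  qed
  have intij: "integrable M (\<lambda>x. (w (B i x) - mu) * (w (B j x) - mu))" if "i \<in> ?I" "j \<in> ?I" for i j
    using that Ysq[of i] Ycross[of i j] by (cases "i = j") auto
  have expij: "expectation (\<lambda>x. (w (B i x) - mu) * (w (B j x) - mu)) = (if i = j then E2 - mu\<^sup>2 else 0)"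
    if "i \<in> ?I" "j \<in> ?I" for i j
    using that Ysq[of i] Ycross[of i j] by (cases "i = j") auto
  have int: "integrable M (\<lambda>x. \<Sum>i\<in>?I. \<Sum>j\<in>?I. (w (B i x) - mu) * (w (B j x) - mu))"
  proof (rule Bochner_Integration.integrable_sum)
    fix i assume i: "i \<in> ?I"
    show "integrable M (\<lambda>x. \<Sum>j\<in>?I. (w (B i x) - mu) * (w (B j x) - mu))"
    proof (rule Bochner_Integration.integrable_sum)
      fix j assume "j \<in> ?I" then show "integrable M (\<lambda>x. (w (B i x) - mu) * (w (B j x) - mu))" using intij[OF i] by blast
    qed
  qed
  have "(\<integral>\<^sup>+x. G3 k (\<lambda>i\<in>{..<k}. B i x) \<partial>M) = (\<integral>\<^sup>+x. ennreal (\<Sum>i\<in>?I. \<Sum>j\<in>?I. (w (B i x) - mu) * (w (B j x) - mu)) \<partial>M)"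
    unfolding G3_def eqT ..
  also have "\<dots> = ennreal (\<integral>x. (\<Sum>i\<in>?I. \<Sum>j\<in>?I. (w (B i x) - mu) * (w (B j x) - mu)) \<partial>M)"
  proof (rule nn_integral_eq_integral[OF int])
    show "AE x in M. 0 \<le> (\<Sum>i\<in>?I. \<Sum>j\<in>?I. (w (B i x) - mu) * (w (B j x) - mu))"
      by (intro AE_I2) (metis eqT zero_le_power2)
  qed
  also have "(\<integral>x. (\<Sum>i\<in>?I. \<Sum>j\<in>?I. (w (B i x) - mu) * (w (B j x) - mu)) \<partial>M)
      = (\<Sum>i\<in>?I. \<Sum>j\<in>?I. expectation (\<lambda>x. (w (B i x) - mu) * (w (B j x) - mu)))"
  proof -
    have inner: "integrable M (\<lambda>x. \<Sum>j\<in>?I. (w (B i x) - mu) * (w (B j x) - mu))" if i: "i \<in> ?I" for i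
    proof (rule Bochner_Integration.integrable_sum)
      fix j assume "j \<in> ?I" then show "integrable M (\<lambda>x. (w (B i x) - mu) * (w (B j x) - mu))" using intij[OF i] by blast
    qed
    have "(\<integral>x. (\<Sum>i\<in>?I. \<Sum>j\<in>?I. (w (B i x) - mu) * (w (B j x) - mu)) \<partial>M)
       = (\<Sum>i\<in>?I. \<integral>x. (\<Sum>j\<in>?I. (w (B i x) - mu) * (w (B j x) - mu)) \<partial>M)"
      by (rule Bochner_Integration.integral_sum) (rule inner)
    also have "\<dots> = (\<Sum>i\<in>?I. \<Sum>j\<in>?I. expectation (\<lambda>x. (w (B i x) - mu) * (w (B j x) - mu)))"
    proof (rule sum.cong[OF refl])
      fix i assume i: "i \<in> ?I"
      show "(\<integral>x. (\<Sum>j\<in>?I. (w (B i x) - mu) * (w (B j x) - mu)) \<partial>M) = (\<Sum>j\<in>?I. expectation (\<lambda>x. (w (B i x) - mu) * (w (B j x) - mu)))"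
        by (rule Bochner_Integration.integral_sum) (use intij[OF i] in blast)
    qed
    finally show ?thesis .
  qed
  also have "\<dots> = (\<Sum>i\<in>?I. \<Sum>j\<in>?I. (if i = j then E2 - mu\<^sup>2 else 0))"
    by (intro sum.cong refl) (simp add: expij)
  also have "\<dots> = real (k - 1) * (E2 - mu\<^sup>2)"
    by simp
  finally show ?thesis .
qed

end

lemma exp_neg_le: fixes y :: real assumes "0 \<le> y" shows "exp (- y) \<le> 1 - y + y\<^sup>2 / 2"
proof -
  define f where "f y = 1 - y + y\<^sup>2 / 2 - exp (- y)" for y :: real
  have "f 0 \<le> f y"
  proof (rule DERIV_nonneg_imp_nondecreasing[OF assms])
    fix x :: real assume x: "0 \<le> x" "x \<le> y"
    have "DERIV f x :> (- 1 + x + exp (- x))"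
      unfolding f_def by (auto intro!: derivative_eq_intros simp: power2_eq_square)
    moreover have "0 \<le> - 1 + x + exp (- x)" using exp_ge_add_one_self[of "- x"] by linarith
    ultimately show "\<exists>d. DERIV f x :> d \<and> d \<ge> 0" by blast
  qed
  then show ?thesis by (simp add: f_def)
qed

context setting begin

definition "tt = mu / (2 * E2)"
definition "rho = 1 - tt * mu + tt\<^sup>2 * E2 / 2"

lemma E2_pos: "E2 > 0" using E2_ge mu_pos by (smt (verit) zero_less_power2)
lemma tt_pos: "tt > 0" using mu_pos E2_pos by (simp add: tt_def)

lemma rho'_le: "(\<integral>\<^sup>+x. ennreal (exp (- tt * w (B 1 x))) \<partial>M) \<le> ennreal rho"
proof -
  have "(\<integral>\<^sup>+x. ennreal (exp (- tt * w (B 1 x))) \<partial>M) \<le> (\<integral>\<^sup>+x. ennreal (1 - tt * w (B 1 x) + (tt * w (B 1 x))\<^sup>2 / 2) \<partial>M)"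
  proof (intro nn_integral_mono ennreal_leI)
    fix x assume x: "x \<in> space M"
    have "0 \<le> tt * w (B 1 x)" using tt_pos w_nonneg[of "B 1 x"] x measurable_space[OF B_meas] by auto
    from exp_neg_le[OF this] show "exp (- tt * w (B 1 x)) \<le> 1 - tt * w (B 1 x) + (tt * w (B 1 x))\<^sup>2 / 2" by simp
  qed
  also have "\<dots> = ennreal (\<integral>x. 1 - tt * w (B 1 x) + (tt * w (B 1 x))\<^sup>2 / 2 \<partial>M)"
  proof (rule nn_integral_eq_integral)
    show "integrable M (\<lambda>x. 1 - tt * w (B 1 x) + (tt * w (B 1 x))\<^sup>2 / 2)"
      using W1_int W1sq_int by (simp add: power_mult_distrib)
    show "AE x in M. 0 \<le> 1 - tt * w (B 1 x) + (tt * w (B 1 x))\<^sup>2 / 2"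
    proof (rule AE_I2)
      fix x
      have "0 \<le> (tt * w (B 1 x) - 1)\<^sup>2 + 1" by simp
      then show "0 \<le> 1 - tt * w (B 1 x) + (tt * w (B 1 x))\<^sup>2 / 2" by (simp add: power2_eq_square algebra_simps)
    qed
  qed
  also have "(\<integral>x. 1 - tt * w (B 1 x) + (tt * w (B 1 x))\<^sup>2 / 2 \<partial>M) = rho"
    using W1_int W1sq_int by (simp add: rho_def prob_space power_mult_distrib E2_def mu_def)
  finally show ?thesis .
qed

lemma rho_nonneg: "0 \<le> rho"
proof -
  have "0 \<le> (tt * mu - 1)\<^sup>2 + tt\<^sup>2 * (E2 - mu\<^sup>2)" using E2_ge by simp
  then show ?thesis by (simp add: rho_def power2_eq_square algebra_simps)
qed

lemma G4_int:
  assumes k: "k \<ge> 1"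
  shows "(\<integral>\<^sup>+x. G4 k (\<lambda>i\<in>{..<k}. B i x) \<partial>M) \<le> ennreal (exp (tt * ee k / 2)) * ennreal rho ^ (k - 1)"
proof -
  let ?I = "{1..<k}"
  define X where "X i x = ennreal (exp (- tt * w (B i x)))" for i x
  have pw: "G4 k (\<lambda>i\<in>{..<k}. B i x) \<le> ennreal (exp (tt * ee k / 2)) * (\<Prod>i\<in>?I. X i x)" for x
  proof -
    have Tr: "Tr k (\<lambda>i\<in>{..<k}. B i x) = (\<Sum>i\<in>?I. w (B i x))" unfolding Tr_def by (intro sum.cong) auto
    have "(\<Prod>i\<in>?I. X i x) = ennreal (\<Prod>i\<in>?I. exp (- tt * w (B i x)))"
      unfolding X_def by (rule prod_ennreal) simp
    also have "(\<Prod>i\<in>?I. exp (- tt * w (B i x))) = exp (- tt * (\<Sum>i\<in>?I. w (B i x)))"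
      by (simp add: exp_sum[symmetric] sum_distrib_left)
    finally have "ennreal (exp (tt * ee k / 2)) * (\<Prod>i\<in>?I. X i x) = ennreal (exp (tt * (ee k / 2 - (\<Sum>i\<in>?I. w (B i x)))))"
      by (simp add: ennreal_mult''[symmetric] exp_add[symmetric] algebra_simps)
    moreover have "G4 k (\<lambda>i\<in>{..<k}. B i x) \<le> ennreal (exp (tt * (ee k / 2 - (\<Sum>i\<in>?I. w (B i x)))))"
      unfolding G4_def Tr using tt_pos by (auto intro!: ennreal_leI)
    ultimately show ?thesis by simp
  qed
  have Xm: "X i \<in> borel_measurable M" for i unfolding X_def by measurable
  have ind: "indep_vars (\<lambda>_. borel) X ?I"
  proof -
    have "indep_vars (\<lambda>_. borel) (\<lambda>i x. (\<lambda>b. ennreal (exp (- tt * w b))) (B i x)) UNIV"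
      by (rule indep_vars_compose2[OF B_indep]) measurable
    then show ?thesis unfolding X_def by (rule indep_vars_subset) simp
  qed
  have P: "(\<integral>\<^sup>+x. (\<Prod>i\<in>?I. X i x) \<partial>M) \<le> ennreal rho ^ (k - 1)"
  proof -
  have "(\<integral>\<^sup>+x. (\<Prod>i\<in>?I. X i x) \<partial>M) = (\<Prod>i\<in>?I. \<integral>\<^sup>+x. X i x \<partial>M)"
    by (rule indep_vars_nn_integral[OF _ ind]) auto
  also have "\<dots> = (\<Prod>i\<in>?I. \<integral>\<^sup>+x. ennreal (exp (- tt * w (B 1 x))) \<partial>M)"
    unfolding X_def by (intro prod.cong refl same_law) auto
  also have "\<dots> \<le> (\<Prod>i\<in>?I. ennreal rho)"
    by (simp only: prod_constant) (rule power_mono[OF rho'_le], simp)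
  also have "\<dots> = ennreal rho ^ (k - 1)" by simp
  finally show ?thesis .
  qed
  have "(\<integral>\<^sup>+x. G4 k (\<lambda>i\<in>{..<k}. B i x) \<partial>M) \<le> (\<integral>\<^sup>+x. ennreal (exp (tt * ee k / 2)) * (\<Prod>i\<in>?I. X i x) \<partial>M)"
    by (intro nn_integral_mono pw)
  also have "\<dots> = ennreal (exp (tt * ee k / 2)) * (\<integral>\<^sup>+x. (\<Prod>i\<in>?I. X i x) \<partial>M)"
    using Xm by (intro nn_integral_cmult) (auto intro!: borel_measurable_prod_ennreal)
  also have "\<dots> \<le> ennreal (exp (tt * ee k / 2)) * ennreal rho ^ (k - 1)"
    by (rule mult_left_mono[OF P]) simp
  finally show ?thesis .
qed

end

context setting begin

definition "aa j = enn2real (AA j)"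

lemma AA_eq: "j \<le> 2 \<Longrightarrow> AA j = ennreal (aa j)"
  using mm_mom_finite[of j] unfolding aa_def AA_def by (simp add: ennreal_enn2real less_top[symmetric])

lemma aa_nonneg: "0 \<le> aa j" by (simp add: aa_def)

definition "bb k = 3 / (ee k)\<^sup>2 * aa 2 + (2 * mu + sqrt (ee k)) / (ee k)\<^sup>2 * aa 1
  + 2 / (ee k)\<^sup>2 * aa 1 * (2 * mu0) + 1 / (sqrt (ee k) * (ee k)\<^sup>2) * aa 1 * (real (k - 1) * (E2 - mu\<^sup>2))
  + aa 0 * (exp (tt * ee k / 2) * rho ^ (k - 1))"

lemma per_k_real:
  assumes k: "k \<ge> 1" and kn: "k < n"
  shows "(\<integral>\<^sup>+x. ennreal \<bar>J n k x * D n k x - Ifun (ee k) (w (B k x)) (\<Sum>i\<le>k. w (B i x)) (J n k x) (H n k x) * D n k x\<bar> \<partial>M)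
    \<le> ennreal (bb k)"
proof -
  let ?e = "ee k"
  have e: "?e > 0" by (rule ee_pos)
  have v: "0 \<le> E2 - mu\<^sup>2" using E2_ge by simp
  have nn: "0 \<le> 3 / ?e\<^sup>2" "0 \<le> (2 * mu + sqrt ?e) / ?e\<^sup>2" "0 \<le> 2 / ?e\<^sup>2" "0 \<le> 1 / (sqrt ?e * ?e\<^sup>2)"
    "0 \<le> 2 * mu0" "0 \<le> real (k - 1) * (E2 - mu\<^sup>2)" "0 \<le> exp (tt * ?e / 2)" "0 \<le> rho ^ (k - 1)"
    using e mu_pos mu0_pos v rho_nonneg by auto
  note a = aa_nonneg
  have A012: "AA 0 = ennreal (aa 0)" "AA 1 = ennreal (aa 1)" "AA 2 = ennreal (aa 2)"
    by (rule AA_eq, simp)+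
  have "(\<integral>\<^sup>+x. ennreal \<bar>J n k x * D n k x - Ifun (ee k) (w (B k x)) (\<Sum>i\<le>k. w (B i x)) (J n k x) (H n k x) * D n k x\<bar> \<partial>M)
    \<le> ennreal (3 / ?e\<^sup>2) * AA 2 + ennreal ((2 * mu + sqrt ?e) / ?e\<^sup>2) * AA 1
      + ennreal (2 / ?e\<^sup>2) * AA 1 * (\<integral>\<^sup>+x. G2 (\<lambda>i\<in>{..<k}. B i x) \<partial>M)
      + ennreal (1 / (sqrt ?e * ?e\<^sup>2)) * AA 1 * (\<integral>\<^sup>+x. G3 k (\<lambda>i\<in>{..<k}. B i x) \<partial>M)
      + ennreal 1 * AA 0 * (\<integral>\<^sup>+x. G4 k (\<lambda>i\<in>{..<k}. B i x) \<partial>M)"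
    by (rule per_k_bound[OF k kn])
  also have "\<dots> \<le> ennreal (3 / ?e\<^sup>2) * ennreal (aa 2) + ennreal ((2 * mu + sqrt ?e) / ?e\<^sup>2) * ennreal (aa 1)
      + ennreal (2 / ?e\<^sup>2) * ennreal (aa 1) * ennreal (2 * mu0)
      + ennreal (1 / (sqrt ?e * ?e\<^sup>2)) * ennreal (aa 1) * ennreal (real (k - 1) * (E2 - mu\<^sup>2))
      + ennreal 1 * ennreal (aa 0) * (ennreal (exp (tt * ?e / 2)) * ennreal rho ^ (k - 1))"
    unfolding G2_int[OF k] G3_int[OF k] A012
    by (intro add_left_mono mult_left_mono G4_int[OF k]) auto
  also have "\<dots> = ennreal (bb k)"
  proof -
    have p: "ennreal (rho ^ (k - 1)) = ennreal rho ^ (k - 1)" using rho_nonneg by (simp add: ennreal_power)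
    have q1: "ennreal (3 / ?e\<^sup>2 * aa 2) = ennreal (3 / ?e\<^sup>2) * ennreal (aa 2)" by (rule ennreal_mult[OF nn(1) a])
    have q2: "ennreal ((2 * mu + sqrt ?e) / ?e\<^sup>2 * aa 1) = ennreal ((2 * mu + sqrt ?e) / ?e\<^sup>2) * ennreal (aa 1)"
      by (rule ennreal_mult[OF nn(2) a])
    have q3: "ennreal (2 / ?e\<^sup>2 * aa 1 * (2 * mu0)) = ennreal (2 / ?e\<^sup>2) * ennreal (aa 1) * ennreal (2 * mu0)"
      by (subst ennreal_mult[OF mult_nonneg_nonneg[OF nn(3) a] nn(5)], subst ennreal_mult[OF nn(3) a], rule refl)
    have q4: "ennreal (1 / (sqrt ?e * ?e\<^sup>2) * aa 1 * (real (k - 1) * (E2 - mu\<^sup>2)))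
        = ennreal (1 / (sqrt ?e * ?e\<^sup>2)) * ennreal (aa 1) * ennreal (real (k - 1) * (E2 - mu\<^sup>2))"
      by (subst ennreal_mult[OF mult_nonneg_nonneg[OF nn(4) a] nn(6)], subst ennreal_mult[OF nn(4) a], rule refl)
    have q5: "ennreal (aa 0 * (exp (tt * ?e / 2) * rho ^ (k - 1))) = ennreal 1 * ennreal (aa 0) * (ennreal (exp (tt * ?e / 2)) * ennreal rho ^ (k - 1))"
      by (subst ennreal_mult[OF a mult_nonneg_nonneg[OF nn(7) nn(8)]], subst ennreal_mult[OF nn(7) nn(8)], simp only: p ennreal_1 mult_1_left)
    have s5: "ennreal (bb k) = ennreal (3 / ?e\<^sup>2 * aa 2) + ennreal ((2 * mu + sqrt ?e) / ?e\<^sup>2 * aa 1)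
       + ennreal (2 / ?e\<^sup>2 * aa 1 * (2 * mu0)) + ennreal (1 / (sqrt ?e * ?e\<^sup>2) * aa 1 * (real (k - 1) * (E2 - mu\<^sup>2)))
       + ennreal (aa 0 * (exp (tt * ?e / 2) * rho ^ (k - 1)))"
      unfolding bb_def
      by (rule ennreal_sum5[OF mult_nonneg_nonneg[OF nn(1) a] mult_nonneg_nonneg[OF nn(2) a]
          mult_nonneg_nonneg[OF mult_nonneg_nonneg[OF nn(3) a] nn(5)] mult_nonneg_nonneg[OF mult_nonneg_nonneg[OF nn(4) a] nn(6)]
          mult_nonneg_nonneg[OF a mult_nonneg_nonneg[OF nn(7) nn(8)]]])
    show ?thesis unfolding s5 q1 q2 q3 q4 q5 ..
  qed
  finally show ?thesis .
qed

end

lemma inv_e32: fixes e :: real assumes "e > 0" shows "1 / (e * sqrt e) = e powr (-3/2)"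
proof -
  have "e powr (3/2) = e powr (1 + 1/2)" by simp
  also have "\<dots> = e powr 1 * e powr (1/2)" by (rule powr_add)
  also have "\<dots> = e * sqrt e" using assms by (simp add: powr_half_sqrt)
  finally show ?thesis by (simp add: powr_minus_divide)
qed

context setting begin

definition "rr = exp (tt * mu / 2) * rho"
definition "K1 = (3 * aa 2 + 2 * mu * aa 1 + 4 * mu0 * aa 1) / mu\<^sup>2"
definition "K2 = (aa 1 + aa 1 * E2 / mu) * mu powr (-3/2)"
definition "K3 = aa 0 * exp (tt * mu0 / 2) * exp (tt * mu / 2)"
definition "cc k = K1 * inverse (real k ^ 2) + K2 * real k powr (-3/2) + K3 * rr ^ (k - 1)"

lemma rr_bounds: "0 \<le> rr" "rr < 1"
proof -
  show "0 \<le> rr" unfolding rr_def using rho_nonneg by simp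
  define x where "x = mu\<^sup>2 / E2"
  have x: "x > 0" using mu_pos E2_pos by (simp add: x_def)
  have r: "rho = 1 - 3 / 8 * x" using E2_pos by (simp add: rho_def tt_def x_def field_simps power2_eq_square)
  have t: "tt * mu / 2 = x / 4" using E2_pos by (simp add: tt_def x_def field_simps power2_eq_square)
  have "rr = exp (x / 4) * (1 - 3 / 8 * x)" by (simp add: rr_def r t)
  also have "\<dots> \<le> exp (x / 4) * exp (- (3 / 8 * x))"
    using exp_ge_add_one_self[of "- (3/8 * x)"] by (intro mult_left_mono) auto
  also have "\<dots> = exp (- (x / 8))" by (simp add: exp_add[symmetric])
  also have "\<dots> < 1" using x by simp
  finally show "rr < 1" .
qed

lemma K_nonneg: "0 \<le> K1" "0 \<le> K2" "0 \<le> K3"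
  using aa_nonneg mu_pos mu0_pos E2_pos by (auto simp: K1_def K2_def K3_def intro!: add_nonneg_nonneg mult_nonneg_nonneg divide_nonneg_nonneg)

lemma cc_nonneg: "0 \<le> cc k"
  unfolding cc_def using K_nonneg rr_bounds by (intro add_nonneg_nonneg mult_nonneg_nonneg) auto

lemma cc_summable: "summable cc"
proof -
  have s1: "summable (\<lambda>k. K1 * inverse (real k ^ 2))"
    using inverse_power_summable[of 2, where 'a=real] by (intro summable_mult) auto
  have s2: "summable (\<lambda>k. K2 * real k powr (-3/2))"
    by (intro summable_mult) (simp add: summable_real_powr_iff)
  have s3: "summable (\<lambda>k. K3 * rr ^ (k - 1))"
  proof -
    have "summable (\<lambda>k. K3 * rr ^ k)" using rr_bounds by (intro summable_mult summable_geometric) auto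
    then have "summable (\<lambda>k. K3 * rr ^ (Suc k - 1))" by simp
    then show ?thesis by (subst summable_Suc_iff[symmetric])
  qed
  show ?thesis unfolding cc_def using s1 s2 s3 by (intro summable_add)
qed

lemma bb_le_cc: assumes k: "k \<ge> 1" shows "bb k \<le> cc k"
proof -
  let ?e = "ee k"
  have e: "?e > 0" by (rule ee_pos)
  have ek: "real k * mu \<le> ?e" using mu0_pos by (simp add: ee_def)
  have kmu: "real k * mu > 0" using k mu_pos by simp
  have a: "\<And>j. 0 \<le> aa j" by (rule aa_nonneg)
  have v: "0 \<le> E2 - mu\<^sup>2" using E2_ge by simp
  have sq: "sqrt ?e * sqrt ?e = ?e" using e by simp
  have pa: "3 / ?e\<^sup>2 * aa 2 + 2 * mu / ?e\<^sup>2 * aa 1 + 2 / ?e\<^sup>2 * aa 1 * (2 * mu0) \<le> K1 * inverse (real k ^ 2)"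
  proof -
    have "3 / ?e\<^sup>2 * aa 2 + 2 * mu / ?e\<^sup>2 * aa 1 + 2 / ?e\<^sup>2 * aa 1 * (2 * mu0) = (3 * aa 2 + 2 * mu * aa 1 + 4 * mu0 * aa 1) / ?e\<^sup>2"
      using e by (simp add: field_simps)
    also have "\<dots> \<le> (3 * aa 2 + 2 * mu * aa 1 + 4 * mu0 * aa 1) / (real k * mu)\<^sup>2"
    proof (rule divide_left_mono)
      show "(real k * mu)\<^sup>2 \<le> ?e\<^sup>2" using kmu ek by (intro power_mono) auto
      show "0 \<le> 3 * aa 2 + 2 * mu * aa 1 + 4 * mu0 * aa 1" using a mu_pos mu0_pos by (intro add_nonneg_nonneg mult_nonneg_nonneg) auto
      show "0 < ?e\<^sup>2 * (real k * mu)\<^sup>2" by (intro mult_pos_pos zero_less_power kmu e)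
    qed
    also have "\<dots> = K1 * inverse (real k ^ 2)" using mu_pos by (simp add: K1_def power_mult_distrib field_simps)
    finally show ?thesis .
  qed
  have pb: "sqrt ?e / ?e\<^sup>2 * aa 1 + 1 / (sqrt ?e * ?e\<^sup>2) * aa 1 * (real (k - 1) * (E2 - mu\<^sup>2)) \<le> K2 * real k powr (-3/2)"
  proof -
    have k1: "real (k - 1) * (E2 - mu\<^sup>2) \<le> ?e / mu * E2"
    proof -
      have "real (k - 1) * (E2 - mu\<^sup>2) \<le> real k * E2" using E2_pos v k by (intro mult_mono) auto
      also have "\<dots> \<le> ?e / mu * E2" using ek mu_pos E2_pos by (intro mult_right_mono) (auto simp: field_simps)
      finally show ?thesis .
    qed
    have "1 / (sqrt ?e * ?e\<^sup>2) * aa 1 * (real (k - 1) * (E2 - mu\<^sup>2)) \<le> 1 / (sqrt ?e * ?e\<^sup>2) * aa 1 * (?e / mu * E2)"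
      using k1 a e by (intro mult_left_mono) auto
    also have "\<dots> = aa 1 * E2 / mu * (1 / (?e * sqrt ?e))" using e mu_pos by (simp add: field_simps power2_eq_square)
    finally have b2: "1 / (sqrt ?e * ?e\<^sup>2) * aa 1 * (real (k - 1) * (E2 - mu\<^sup>2)) \<le> aa 1 * E2 / mu * (1 / (?e * sqrt ?e))" .
    have b1: "sqrt ?e / ?e\<^sup>2 * aa 1 = aa 1 * (1 / (?e * sqrt ?e))"
    proof -
      have "sqrt ?e / ?e\<^sup>2 = sqrt ?e / (sqrt ?e * sqrt ?e * ?e)" by (simp only: sq power2_eq_square)
      also have "\<dots> = 1 / (?e * sqrt ?e)" using e by (simp add: field_simps)
      finally show ?thesis by simp
    qed
    have "sqrt ?e / ?e\<^sup>2 * aa 1 + 1 / (sqrt ?e * ?e\<^sup>2) * aa 1 * (real (k - 1) * (E2 - mu\<^sup>2))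
        \<le> (aa 1 + aa 1 * E2 / mu) * (1 / (?e * sqrt ?e))"
    proof -
      have "(aa 1 + aa 1 * E2 / mu) * (1 / (?e * sqrt ?e)) = aa 1 * (1 / (?e * sqrt ?e)) + aa 1 * E2 / mu * (1 / (?e * sqrt ?e))"
        by (rule distrib_right)
      then show ?thesis using b1 b2 by linarith
    qed
    also have "1 / (?e * sqrt ?e) = ?e powr (-3/2)" by (rule inv_e32[OF e])
    also have "?e powr (-3/2) \<le> (real k * mu) powr (-3/2)" by (rule powr_mono2'[OF _ kmu ek]) simp
    also have "(aa 1 + aa 1 * E2 / mu) * ((real k * mu) powr (-3/2)) = K2 * real k powr (-3/2)"
      using mu_pos by (simp add: K2_def powr_mult)
    finally show ?thesis using a mu_pos E2_pos by (simp add: mult_left_mono divide_nonneg_nonneg)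
  qed
  have pc: "aa 0 * (exp (tt * ?e / 2) * rho ^ (k - 1)) = K3 * rr ^ (k - 1)"
  proof -
    have "exp (tt * ?e / 2) = exp (tt * mu0 / 2) * exp (tt * mu / 2) * exp (tt * mu / 2) ^ (k - 1)"
    proof -
      have "tt * ?e / 2 = tt * mu0 / 2 + tt * mu / 2 + real (k - 1) * (tt * mu / 2)"
        using k by (simp add: ee_def of_nat_diff field_simps)
      then show ?thesis by (simp only: exp_add exp_of_nat_mult)
    qed
    then show ?thesis by (simp add: K3_def rr_def power_mult_distrib mult_ac)
  qed
  have "bb k = (3 / ?e\<^sup>2 * aa 2 + 2 * mu / ?e\<^sup>2 * aa 1 + 2 / ?e\<^sup>2 * aa 1 * (2 * mu0))
      + (sqrt ?e / ?e\<^sup>2 * aa 1 + 1 / (sqrt ?e * ?e\<^sup>2) * aa 1 * (real (k - 1) * (E2 - mu\<^sup>2)))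
      + aa 0 * (exp (tt * ?e / 2) * rho ^ (k - 1))"
    unfolding bb_def by (simp add: add_divide_distrib distrib_right)
  also have "\<dots> \<le> cc k" unfolding cc_def pc using pa pb by linarith
  finally show ?thesis .
qed

end

context setting begin

definition "Cst = suminf cc"

lemma Cst_nonneg: "0 \<le> Cst"
  unfolding Cst_def by (intro suminf_nonneg cc_summable cc_nonneg)

lemma sum_bb_le: "(\<Sum>k\<in>{1..<n}. ennreal (bb k)) \<le> ennreal Cst"
proof -
  have "(\<Sum>k\<in>{1..<n}. ennreal (bb k)) \<le> (\<Sum>k\<in>{1..<n}. ennreal (cc k))"
    by (intro sum_mono ennreal_leI bb_le_cc) auto
  also have "\<dots> = ennreal (\<Sum>k\<in>{1..<n}. cc k)" using cc_nonneg by simp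
  also have "\<dots> \<le> ennreal Cst"
    unfolding Cst_def by (intro ennreal_leI sum_le_suminf cc_summable cc_nonneg) auto
  finally show ?thesis .
qed

lemma meas_bound:
  assumes n: "n \<ge> 2" and eps: "\<epsilon> > 0"
  shows "measure M {x \<in> space M. \<bar>(\<Sum>k\<in>{1..<n}. J n k x * D n k x
               - Ifun (ee k) (w (B k x)) (\<Sum>i\<le>k. w (B i x)) (J n k x) (H n k x) * D n k x)
             / sqrt (ln (real n))\<bar> > \<epsilon>} \<le> Cst / (\<epsilon> * sqrt (ln (real n)))"
proof -
  define L where "L = sqrt (ln (real n))"
  have L: "L > 0" unfolding L_def using n by simp
  define t where "t k x = J n k x * D n k x - Ifun (ee k) (w (B k x)) (\<Sum>i\<le>k. w (B i x)) (J n k x) (H n k x) * D n k x" for k x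
  define u where "u x = (\<Sum>k\<in>{1..<n}. ennreal \<bar>t k x\<bar>)" for x
  define c where "c = 1 / (\<epsilon> * L)"
  have c: "c > 0" using L eps by (simp add: c_def)
  have tm: "\<And>k. t k \<in> borel_measurable M" unfolding t_def by measurable
  have um: "u \<in> borel_measurable M" unfolding u_def using tm by measurable
  have sub: "{x \<in> space M. \<bar>(\<Sum>k\<in>{1..<n}. t k x) / L\<bar> > \<epsilon>} \<subseteq> {x \<in> space M. 1 \<le> ennreal c * u x}"
  proof safe
    fix x assume x: "x \<in> space M" and gt: "\<bar>(\<Sum>k\<in>{1..<n}. t k x) / L\<bar> > \<epsilon>"
    have "\<epsilon> * L < \<bar>\<Sum>k\<in>{1..<n}. t k x\<bar>" using gt L by (simp add: abs_divide field_simps)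
    also have "\<dots> \<le> (\<Sum>k\<in>{1..<n}. \<bar>t k x\<bar>)" by (rule sum_abs)
    finally have "1 \<le> c * (\<Sum>k\<in>{1..<n}. \<bar>t k x\<bar>)" using L eps by (simp add: c_def field_simps)
    then have "ennreal 1 \<le> ennreal (c * (\<Sum>k\<in>{1..<n}. \<bar>t k x\<bar>))" by (rule ennreal_leI)
    also have "\<dots> = ennreal c * u x" unfolding u_def using c by (simp add: ennreal_mult)
    finally show "1 \<le> ennreal c * u x" by simp
  qed
  have "emeasure M {x \<in> space M. 1 \<le> ennreal c * u x} \<le> ennreal c * (\<integral>\<^sup>+x. u x * indicator (space M) x \<partial>M)"
    by (rule nn_integral_Markov_inequality) (use um in auto)
  also have "(\<integral>\<^sup>+x. u x * indicator (space M) x \<partial>M) = (\<integral>\<^sup>+x. u x \<partial>M)"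
    by (intro nn_integral_cong) simp
  also have "\<dots> = (\<Sum>k\<in>{1..<n}. \<integral>\<^sup>+x. ennreal \<bar>t k x\<bar> \<partial>M)"
    unfolding u_def using tm by (intro nn_integral_sum) auto
  also have "\<dots> \<le> (\<Sum>k\<in>{1..<n}. ennreal (bb k))"
    unfolding t_def by (intro sum_mono per_k_real) auto
  also have "\<dots> \<le> ennreal Cst" by (rule sum_bb_le)
  finally have "emeasure M {x \<in> space M. 1 \<le> ennreal c * u x} \<le> ennreal c * ennreal Cst"
    by (simp add: mult_left_mono)
  then have "emeasure M {x \<in> space M. \<bar>(\<Sum>k\<in>{1..<n}. t k x) / L\<bar> > \<epsilon>} \<le> ennreal (c * Cst)"
  proof -
    have Sm: "{x \<in> space M. 1 \<le> ennreal c * u x} \<in> sets M" using um by measurable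
    have "emeasure M {x \<in> space M. \<bar>(\<Sum>k\<in>{1..<n}. t k x) / L\<bar> > \<epsilon>} \<le> emeasure M {x \<in> space M. 1 \<le> ennreal c * u x}"
      by (rule emeasure_mono[OF sub Sm])
    also have "\<dots> \<le> ennreal c * ennreal Cst" by fact
    also have "\<dots> = ennreal (c * Cst)" by (rule ennreal_mult'[symmetric]) (use c in simp)
    finally show ?thesis .
  qed
  then have "measure M {x \<in> space M. \<bar>(\<Sum>k\<in>{1..<n}. t k x) / L\<bar> > \<epsilon>} \<le> c * Cst"
    using c Cst_nonneg by (simp add: emeasure_eq_measure)
  then show ?thesis unfolding t_def L_def c_def by simp
qed

lemma final:
  "\<forall>\<epsilon>>0. (\<lambda>n. measure M {x \<in> space M. \<bar>(\<Sum>k\<in>{1..<n}. J n k x * D n k x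
               - Ifun (ee k) (w (B k x)) (\<Sum>i\<le>k. w (B i x)) (J n k x) (H n k x) * D n k x)
             / sqrt (ln (real n))\<bar> > \<epsilon>}) \<longlonglongrightarrow> 0"
proof (intro allI impI)
  fix \<epsilon> :: real assume eps: "\<epsilon> > 0"
  have lim: "(\<lambda>n. (Cst / \<epsilon>) / sqrt (ln (real n))) \<longlonglongrightarrow> 0"
  proof (rule tendsto_divide_0[OF tendsto_const])
    have "filterlim (\<lambda>n. sqrt (ln (real n))) at_top sequentially"
      by (rule filterlim_compose[OF sqrt_at_top filterlim_compose[OF ln_at_top filterlim_real_sequentially]])
    then show "filterlim (\<lambda>n. sqrt (ln (real n))) at_infinity sequentially"
      by (rule filterlim_at_top_imp_at_infinity)
  qed
  show "(\<lambda>n. measure M {x \<in> space M. \<bar>(\<Sum>k\<in>{1..<n}. J n k x * D n k x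
               - Ifun (ee k) (w (B k x)) (\<Sum>i\<le>k. w (B i x)) (J n k x) (H n k x) * D n k x)
             / sqrt (ln (real n))\<bar> > \<epsilon>}) \<longlonglongrightarrow> 0"
  proof (rule tendsto_sandwich[OF _ _ tendsto_const lim])
    show "\<forall>\<^sub>F n in sequentially. 0 \<le> measure M {x \<in> space M. \<bar>(\<Sum>k\<in>{1..<n}. J n k x * D n k x
               - Ifun (ee k) (w (B k x)) (\<Sum>i\<le>k. w (B i x)) (J n k x) (H n k x) * D n k x)
             / sqrt (ln (real n))\<bar> > \<epsilon>}" by simp
    show "\<forall>\<^sub>F n in sequentially. measure M {x \<in> space M. \<bar>(\<Sum>k\<in>{1..<n}. J n k x * D n k x
               - Ifun (ee k) (w (B k x)) (\<Sum>i\<le>k. w (B i x)) (J n k x) (H n k x) * D n k x)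
             / sqrt (ln (real n))\<bar> > \<epsilon>} \<le> Cst / \<epsilon> / sqrt (ln (real n))"
      using eventually_ge_at_top[of 2]
    proof eventually_elim
      case (elim n)
      then show ?case using meas_bound[OF elim eps] by (simp add: divide_divide_eq_left)
    qed
  qed
qed

end

theorem lemma3p3:
  fixes M :: "'a measure" and N :: "'b measure"
    and B :: "nat \<Rightarrow> 'a \<Rightarrow> 'b"
    and w :: "'b \<Rightarrow> real"
    and \<kappa> :: "'b \<Rightarrow> real measure"
    and J D H :: "nat \<Rightarrow> nat \<Rightarrow> 'a \<Rightarrow> real"
  assumes P: "prob_space M"
    and B_meas: "\<And>k. B k \<in> measurable M N"
    and B_indep: "prob_space.indep_vars M (\<lambda>_. N) B UNIV"
    and B_ident: "\<And>k. k \<ge> 1 \<Longrightarrow> distr M N (B k) = distr M N (B 1)"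
    and w_meas: "w \<in> borel_measurable N"
    and w_nonneg: "\<And>b. b \<in> space N \<Longrightarrow> w b \<ge> 0"
    and W0_pos: "\<And>x. x \<in> space M \<Longrightarrow> w (B 0 x) > 0"
    and kappa_meas: "\<kappa> \<in> measurable N (prob_algebra borel)"
    and kappa_nonneg: "\<And>b. b \<in> space N \<Longrightarrow> AE d in \<kappa> b. d \<ge> 0"
    and EW_pos: "prob_space.expectation M (\<lambda>x. w (B 1 x)) > 0"
    and EW0_fin: "integrable M (\<lambda>x. w (B 0 x))"
    and mom1: "integrable (bind (distr M N (B 1)) (\<lambda>b. distr (\<kappa> b) (borel \<Otimes>\<^sub>M borel) (\<lambda>d. (w b, d))))
                  (\<lambda>(a, d). a\<^sup>2)"
    and mom2: "integrable (bind (distr M N (B 1)) (\<lambda>b. distr (\<kappa> b) (borel \<Otimes>\<^sub>M borel) (\<lambda>d. (w b, d))))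
                  (\<lambda>(a, d). (a * d)\<^sup>2)"
    and mom3: "integrable (bind (distr M N (B 1)) (\<lambda>b. distr (\<kappa> b) (borel \<Otimes>\<^sub>M borel) (\<lambda>d. (w b, d))))
                  (\<lambda>(a, d). a * d\<^sup>2)"
    and mom4: "integrable (bind (distr M N (B 1)) (\<lambda>b. distr (\<kappa> b) (borel \<Otimes>\<^sub>M borel) (\<lambda>d. (w b, d))))
                  (\<lambda>(a, d). d\<^sup>2)"
    and J_meas: "\<And>n k. J n k \<in> borel_measurable M"
    and D_meas: "\<And>n k. D n k \<in> borel_measurable M"
    and H_meas: "\<And>n k. H n k \<in> borel_measurable M"
    and joint: "\<And>n. distr M
        ((\<Pi>\<^sub>M i\<in>UNIV. N) \<Otimes>\<^sub>M (\<Pi>\<^sub>M k\<in>{0..<n}. borel \<Otimes>\<^sub>M (borel \<Otimes>\<^sub>M borel)))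
        (\<lambda>x. ((\<lambda>i. B i x), (\<lambda>k\<in>{0..<n}. (J n k x, D n k x, H n k x))))
      = bind (distr M (\<Pi>\<^sub>M i\<in>UNIV. N) (\<lambda>x i. B i x))
          (\<lambda>b. distr (\<Pi>\<^sub>M k\<in>{0..<n}. triple_law w \<kappa>
                         (real k * prob_space.expectation M (\<lambda>x. w (B 1 x))
                            + prob_space.expectation M (\<lambda>x. w (B 0 x))) b k)
                  ((\<Pi>\<^sub>M i\<in>UNIV. N) \<Otimes>\<^sub>M (\<Pi>\<^sub>M k\<in>{0..<n}. borel \<Otimes>\<^sub>M (borel \<Otimes>\<^sub>M borel)))
                  (\<lambda>t. (b, t)))"
  shows "\<forall>\<epsilon>>0. (\<lambda>n. measure M {x \<in> space M.
            \<bar>(\<Sum>k\<in>{1..<n}.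
               J n k x * D n k x
               - Ifun (real k * prob_space.expectation M (\<lambda>x. w (B 1 x))
                         + prob_space.expectation M (\<lambda>x. w (B 0 x)))
                      (w (B k x)) (\<Sum>i\<le>k. w (B i x)) (J n k x) (H n k x) * D n k x)
             / sqrt (ln (real n))\<bar> > \<epsilon>}) \<longlonglongrightarrow> 0"
proof -
  interpret S: setting M N B w \<kappa> J D H
    by (rule setting.intro[OF P], unfold_locales) (fact assms)+
  show ?thesis using S.final unfolding S.ee_def S.mu_def S.mu0_def .
qed

end
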